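(* There is an algorithm to decide, for a given CFSM protocol $\mathbf P$ with communication graph $(N,E)$ and a given family of recognizable relations $\mathbf R(S)\subseteq\prod_{\xi\in E}M_\xi^*$ indexed by the composite states $S\in\prod_{j\in N}K_j$ (each given effectively, e.g. as a finite union of products of regular languages specified by finite automata), whether the family is consistent with respect to $\mathbf P$.
   Context: A CFSM protocol $\mathbf P$ has a finite directed communication graph $G=(N,E)$ (edge $\xi$ has tail $-\xi$, head $+\xi$), pairwise disjoint finite message sets $M_\xi$, and for each $j\in N$ a finite state machine $F_j=(K_j,\Sigma_j,T_j,h_j)$: finite state set $K_j$, initial state $h_j$, alphabet $\Sigma_j=\{+b: b\in M_\xi,\ j=+\xi\}\cup\{-b: b\in M_\xi,\ j=-\xi\}$, transitions $T_j\subseteq K_j\times\Sigma_j\times K_j$ ($+b$ = receive, $-b$ = send). A composite state is $S=(p_j:j\in N)$; a channel content is $C=(x_\xi:\xi\in E)$, $x_\xi\in M_\xi^*$; global states are pairs $(S,C)$. A step: some machine $F_i$ takes $p_i\xrightarrow{-b}q_i$ with $b\in M_\beta$, $i=-\beta$, appending $b$ to the end of $x_\beta$; or takes $p_i\xrightarrow{+b}q_i$ with $b\in M_\beta$, $i=+\beta$, provided $x_\beta$ begins with $b$, removing it; all else unchanged. $\vdash^*$ means reachability by finitely many steps. A relation $\mathbf R\subseteq\prod_{\xi\in E}M_\xi^*$ is recognizable if it is a finite union of sets $\prod_{\xi\in E}L_\xi$ with each $L_\xi\subseteq M_\xi^*$ regular. A family $\mathbf R(S)$ is consistent (with respect to $\mathbf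 P$) if $(S,C)\vdash^*(S',C')$ and $C\in\mathbf R(S)$ imply $C'\in\mathbf R(S')$. *)

theory Defs
  imports Main "HOL-Library.Nat_Bijection"
begin

datatype recf =
    Zero_f
  | Suc_f
  | Proj nat
  | Comp recf "recf list"
  | PrimRec recf recf
  | Minim recf

inductive eval :: "recf \<Rightarrow> nat list \<Rightarrow> nat \<Rightarrow> bool" where
  eval_zero: "eval Zero_f xs 0"
| eval_suc: "eval Suc_f (x # xs) (Suc x)"
| eval_proj: "i < length xs \<Longrightarrow> eval (Proj i) xs (xs ! i)"
| eval_comp: "list_all2 (\<lambda>g y. eval g xs y) gs ys \<Longrightarrow> eval f ys z \<Longrightarrow> eval (Comp f gs) xs z"
| eval_pr0: "eval f xs y \<Longrightarrow> eval (PrimRec f g) (0 # xs) y"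
| eval_prS: "eval (PrimRec f g) (n # xs) y \<Longrightarrow> eval g (y # n # xs) z
             \<Longrightarrow> eval (PrimRec f g) (Suc n # xs) z"
| eval_min: "eval f (n # xs) 0 \<Longrightarrow> (\<forall>m<n. \<exists>y. eval f (m # xs) (Suc y))
             \<Longrightarrow> eval (Minim f) xs n"

text \<open>Nodes are 0..<n. Edges are indexed 0..<length es; edge e = (tail, head).
  Messages of edge e are the pairs (e,b) with b < ms!e, so the sets M_e are
  automatically pairwise disjoint; in a channel of edge e only the index b is stored.
  An action (s, e, b) is "-b" (send) if s, "+b" (receive) otherwise, b \<in> M_e.
  Machine j: (number of states k, initial state h, transition list of (p, action, q)),
  state set 0..<k.\<close>

type_synonym action = "bool \<times> nat \<times> nat"
type_synonym machine = "nat \<times> nat \<times> (nat \<times> action \<times> nat) list"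
type_synonym protocol = "nat \<times> (nat \<times> nat) list \<times> nat list \<times> machine list"

fun p_nodes :: "protocol \<Rightarrow> nat" where "p_nodes (n, es, ms, F) = n"
fun p_edges :: "protocol \<Rightarrow> (nat \<times> nat) list" where "p_edges (n, es, ms, F) = es"
fun p_msgs :: "protocol \<Rightarrow> nat list" where "p_msgs (n, es, ms, F) = ms"
fun p_machs :: "protocol \<Rightarrow> machine list" where "p_machs (n, es, ms, F) = F"

fun m_states :: "machine \<Rightarrow> nat" where "m_states (k, h, T) = k"
fun m_init :: "machine \<Rightarrow> nat" where "m_init (k, h, T) = h"
fun m_trans :: "machine \<Rightarrow> (nat \<times> action \<times> nat) list" where "m_trans (k, h, T) = T"

definition wf_protocol :: "protocol \<Rightarrow> bool" where
  "wf_protocol P \<longleftrightarrow>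
     length (p_msgs P) = length (p_edges P) \<and>
     length (p_machs P) = p_nodes P \<and>
     (\<forall>(a, b) \<in> set (p_edges P). a < p_nodes P \<and> b < p_nodes P) \<and>
     (\<forall>j < p_nodes P.
        m_init (p_machs P ! j) < m_states (p_machs P ! j) \<and>
        (\<forall>(p, (s, e, b), q) \<in> set (m_trans (p_machs P ! j)).
           p < m_states (p_machs P ! j) \<and> q < m_states (p_machs P ! j) \<and>
           e < length (p_edges P) \<and> b < p_msgs P ! e \<and>
           (if s then fst (p_edges P ! e) = j else snd (p_edges P ! e) = j)))"

text \<open>Global states (S, C): S composite state (list indexed by nodes),
  C channel contents (list of words indexed by edges).\<close>

definition valid_comp :: "protocol \<Rightarrow> nat list \<Rightarrow> bool" where
  "valid_comp P S \<longleftrightarrow> length S = p_nodes P \<and>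
     (\<forall>j < p_nodes P. S ! j < m_states (p_machs P ! j))"

definition valid_chan :: "protocol \<Rightarrow> nat list list \<Rightarrow> bool" where
  "valid_chan P C \<longleftrightarrow> length C = length (p_edges P) \<and>
     (\<forall>e < length (p_edges P). \<forall>b \<in> set (C ! e). b < p_msgs P ! e)"

inductive step :: "protocol \<Rightarrow> nat list \<times> nat list list \<Rightarrow> nat list \<times> nat list list \<Rightarrow> bool"
  for P where
  send: "j < p_nodes P \<Longrightarrow> (p, (True, e, b), q) \<in> set (m_trans (p_machs P ! j)) \<Longrightarrow>
         S ! j = p \<Longrightarrow> step P (S, C) (S[j := q], C[e := C ! e @ [b]])"
| recv: "j < p_nodes P \<Longrightarrow> (p, (False, e, b), q) \<in> set (m_trans (p_machs P ! j)) \<Longrightarrow>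
         S ! j = p \<Longrightarrow> C ! e = b # w \<Longrightarrow> step P (S, C) (S[j := q], C[e := w])"

text \<open>NFA: (number of states, initial states, final states, transitions (p, letter, q)).\<close>
type_synonym nfa = "nat \<times> nat list \<times> nat list \<times> (nat \<times> nat \<times> nat) list"

inductive nfa_run :: "(nat \<times> nat \<times> nat) list \<Rightarrow> nat \<Rightarrow> nat list \<Rightarrow> nat \<Rightarrow> bool" for T where
  run_nil: "nfa_run T p [] p"
| run_cons: "(p, a, r) \<in> set T \<Longrightarrow> nfa_run T r w q \<Longrightarrow> nfa_run T p (a # w) q"

fun nfa_accepts :: "nfa \<Rightarrow> nat list \<Rightarrow> bool" where
  "nfa_accepts (k, I, Fi, T) w \<longleftrightarrow> (\<exists>p \<in> set I. \<exists>q \<in> set Fi. nfa_run T p w q)"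

text \<open>A recognizable relation: finite union (list) of products; a product is a list
  giving for each edge e an NFA for a regular language L_e \<subseteq> M_e^*.\<close>
type_synonym recrel = "nfa list list"

definition rel_mem :: "protocol \<Rightarrow> recrel \<Rightarrow> nat list list \<Rightarrow> bool" where
  "rel_mem P R C \<longleftrightarrow> valid_chan P C \<and>
     (\<exists>pr \<in> set R. length pr = length (p_edges P) \<and>
        (\<forall>e < length (p_edges P). nfa_accepts (pr ! e) (C ! e)))"

text \<open>A family R(S) indexed by composite states: a finite table; states not listed
  get the empty relation (first matching entry counts).\<close>
type_synonym family = "(nat list \<times> recrel) list"

definition fam_rel :: "family \<Rightarrow> nat list \<Rightarrow> recrel" where
  "fam_rel fam S = (case map_of fam S of Some R \<Rightarrow> R | None \<Rightarrow> [])"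

definition consistent :: "protocol \<Rightarrow> family \<Rightarrow> bool" where
  "consistent P fam \<longleftrightarrow>
     (\<forall>S C S' C'. valid_comp P S \<and> rel_mem P (fam_rel fam S) C \<and> (step P)\<^sup>*\<^sup>* (S, C) (S', C')
        \<longrightarrow> rel_mem P (fam_rel fam S') C')"

fun enc_act :: "action \<Rightarrow> nat" where
  "enc_act (s, e, b) = prod_encode (of_bool s, prod_encode (e, b))"
fun enc_trans :: "nat \<times> action \<times> nat \<Rightarrow> nat" where
  "enc_trans (p, a, q) = prod_encode (p, prod_encode (enc_act a, q))"
fun enc_machine :: "machine \<Rightarrow> nat" where
  "enc_machine (k, h, T) = prod_encode (k, prod_encode (h, list_encode (map enc_trans T)))"
fun enc_protocol :: "protocol \<Rightarrow> nat" where
  "enc_protocol (n, es, ms, F) = prod_encode (n, prod_encode (list_encode (map prod_encode es),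
      prod_encode (list_encode ms, list_encode (map enc_machine F))))"
fun enc_ntrans :: "nat \<times> nat \<times> nat \<Rightarrow> nat" where
  "enc_ntrans (p, a, q) = prod_encode (p, prod_encode (a, q))"
fun enc_nfa :: "nfa \<Rightarrow> nat" where
  "enc_nfa (k, I, Fi, T) = prod_encode (k, prod_encode (list_encode I,
      prod_encode (list_encode Fi, list_encode (map enc_ntrans T))))"
definition enc_recrel :: "recrel \<Rightarrow> nat" where
  "enc_recrel R = list_encode (map (\<lambda>pr. list_encode (map enc_nfa pr)) R)"
fun enc_entry :: "nat list \<times> recrel \<Rightarrow> nat" where
  "enc_entry (S, R) = prod_encode (list_encode S, enc_recrel R)"
definition enc_family :: "family \<Rightarrow> nat" where
  "enc_family fam = list_encode (map enc_entry fam)"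
fun enc_input :: "protocol \<times> family \<Rightarrow> nat" where
  "enc_input (P, fam) = prod_encode (enc_protocol P, enc_family fam)"

end

theory Submission
  imports Defs
begin



datatype exp = EV nat | EZ | ES exp | EC exp "exp list" | ER exp exp exp

primrec ev :: "exp \<Rightarrow> nat list \<Rightarrow> nat" where
  "ev (EV i) xs = xs ! i"
| "ev EZ xs = 0"
| "ev (ES e) xs = Suc (ev e xs)"
| "ev (EC g es) xs = ev g (map (\<lambda>e. ev e xs) es)"
| "ev (ER en e0 e1) xs = rec_nat (ev e0 xs) (\<lambda>i a. ev e1 (a # i # xs)) (ev en xs)"

primrec wfe :: "nat \<Rightarrow> exp \<Rightarrow> bool" where
  "wfe k (EV i) = (i < k)"
| "wfe k EZ = True"
| "wfe k (ES e) = wfe k e"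
| "wfe k (EC g es) = (wfe (length es) g \<and> list_all (wfe k) es)"
| "wfe k (ER en e0 e1) = (wfe k en \<and> wfe k e0 \<and> wfe (Suc (Suc k)) e1)"

lemma eval_projs:
  "length xs = k \<Longrightarrow> list_all2 (\<lambda>g y. eval g xs y) (map Proj [0..<k]) xs"
  by (auto simp: list_all2_conv_all_nth intro: eval_proj)

lemma list_choice:
  "\<forall>e\<in>set es. \<exists>f. P f e \<Longrightarrow> \<exists>fs. list_all2 P fs es"
proof (induction es)
  case Nil
  then show ?case by auto
next
  case (Cons a es)
  then obtain fs where "list_all2 P fs es" by auto
  moreover obtain f where "P f a" using Cons.prems by auto
  ultimately show ?case by (auto intro!: exI[of _ "f # fs"])
qed

lemma compile:
  "wfe k e \<Longrightarrow> \<exists>f. \<forall>xs. length xs = k \<longrightarrow> eval f xs (ev e xs)"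
proof (induction e arbitrary: k)
  case (EV i)
  then show ?case by (auto intro!: exI[of _ "Proj i"] eval_proj)
next
  case EZ
  then show ?case by (auto intro!: exI[of _ "Zero_f"] eval_zero)
next
  case (ES e)
  obtain f where f: "\<forall>xs. length xs = k \<longrightarrow> eval f xs (ev e xs)"
    using ES.IH[of k] ES.prems by auto
  show ?case
    apply (rule exI[of _ "Comp Suc_f [f]"])
    using f by (auto intro!: eval_comp[where ys="[_]"] eval_suc)
next
  case (EC g es)
  have "\<forall>e\<in>set es. \<exists>f. \<forall>xs. length xs = k \<longrightarrow> eval f xs (ev e xs)"
    using EC.IH(2) EC.prems by (auto simp: list_all_iff)
  then have "\<exists>fs. list_all2 (\<lambda>f e. \<forall>xs. length xs = k \<longrightarrow> eval f xs (ev e xs)) fs es"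
    by (rule list_choice)
  then obtain fs where fs: "list_all2 (\<lambda>f e. \<forall>xs. length xs = k \<longrightarrow> eval f xs (ev e xs)) fs es"
    by auto
  obtain fg where fg: "\<forall>ys. length ys = length es \<longrightarrow> eval fg ys (ev g ys)"
    using EC.IH(1) EC.prems by auto
  show ?case
  proof (intro exI allI impI)
    fix xs :: "nat list" assume len: "length xs = k"
    have "list_all2 (\<lambda>g y. eval g xs y) fs (map (\<lambda>e. ev e xs) es)"
      using fs len by (auto simp: list_all2_conv_all_nth)
    then show "eval (Comp fg fs) xs (ev (EC g es) xs)"
      using fg by (auto intro!: eval_comp)
  qed
next
  case (ER en e0 e1)
  obtain fn where fn: "\<forall>xs. length xs = k \<longrightarrow> eval fn xs (ev en xs)"
    using ER.IH(1)[of k] ER.prems by auto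
  obtain f0 where f0: "\<forall>xs. length xs = k \<longrightarrow> eval f0 xs (ev e0 xs)"
    using ER.IH(2)[of k] ER.prems by auto
  obtain f1 where f1: "\<forall>xs. length xs = Suc (Suc k) \<longrightarrow> eval f1 xs (ev e1 xs)"
    using ER.IH(3)[of "Suc (Suc k)"] ER.prems by auto
  have pr: "eval (PrimRec f0 f1) (m # xs) (rec_nat (ev e0 xs) (\<lambda>i a. ev e1 (a # i # xs)) m)"
    if "length xs = k" for m xs
    using that
  proof (induction m)
    case 0
    then show ?case using f0 by (auto intro: eval_pr0)
  next
    case (Suc m)
    then show ?case using f1 by (auto intro: eval_prS)
  qed
  show ?case
  proof (intro exI allI impI)
    fix xs :: "nat list" assume len: "length xs = k"
    have "list_all2 (\<lambda>g y. eval g xs y) (fn # map Proj [0..<k]) (ev en xs # xs)"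
      using fn len eval_projs[OF len] by auto
    then show "eval (Comp (PrimRec f0 f1) (fn # map Proj [0..<k])) xs (ev (ER en e0 e1) xs)"
      using pr[OF len] by (auto intro!: eval_comp)
  qed
qed




definition "addE = ER (EV 1) (EV 0) (ES (EV 0))"
definition "mulE = ER (EV 1) EZ (EC addE [EV 0, EV 2])"
definition "predE = ER (EV 0) EZ (EV 1)"
definition "subE = ER (EV 1) (EV 0) (EC predE [EV 0])"
definition "sgE = ER (EV 0) EZ (ES EZ)"
definition "nsgE = EC subE [ES EZ, EC sgE [EV 0]]"
definition "ltE = EC sgE [EC subE [EV 1, EV 0]]"
definition "eqE = EC nsgE [EC addE [EC subE [EV 0, EV 1], EC subE [EV 1, EV 0]]]"
definition "andE = EC sgE [EC mulE [EV 0, EV 1]]"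
definition "orE = EC sgE [EC addE [EV 0, EV 1]]"
definition "ifE = EC addE [EC mulE [EV 1, EC sgE [EV 0]], EC mulE [EV 2, EC nsgE [EV 0]]]"

lemma rec_add: "rec_nat a (\<lambda>i acc. Suc acc) b = (a::nat) + b" by (induction b) auto
lemma rec_mul: "rec_nat 0 (\<lambda>i acc. acc + a) b = b * (a::nat)" by (induction b) auto
lemma rec_pred: "rec_nat 0 (\<lambda>i acc. i) n = n - 1" by (induction n) auto
lemma rec_sub: "rec_nat a (\<lambda>i acc. acc - Suc 0) b = (a::nat) - b" by (induction b) auto
lemma rec_sg: "rec_nat 0 (\<lambda>i acc. Suc 0) n = of_bool (n \<noteq> 0)" by (induction n) auto

lemma ev_addE[simp]: "ev addE [a, b] = a + b" by (simp add: addE_def rec_add)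
lemma ev_mulE[simp]: "ev mulE [a, b] = a * b" by (simp add: mulE_def rec_mul mult.commute)
lemma ev_predE[simp]: "ev predE [a] = a - 1" by (simp add: predE_def rec_pred)
lemma ev_subE[simp]: "ev subE [a, b] = a - b" by (simp add: subE_def rec_sub)
lemma ev_sgE[simp]: "ev sgE [a] = of_bool (a \<noteq> 0)" by (simp add: sgE_def rec_sg)
lemma ev_nsgE[simp]: "ev nsgE [a] = of_bool (a = 0)" by (simp add: nsgE_def)
lemma ev_ltE[simp]: "ev ltE [a, b] = of_bool (a < b)" by (simp add: ltE_def)
lemma ev_eqE[simp]: "ev eqE [a, b] = of_bool (a = b)" by (simp add: eqE_def)
lemma ev_andE[simp]: "ev andE [a, b] = of_bool (a \<noteq> 0 \<and> b \<noteq> 0)" by (simp add: andE_def)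
lemma ev_orE[simp]: "ev orE [a, b] = of_bool (a \<noteq> 0 \<or> b \<noteq> 0)" by (simp add: orE_def)
lemma ev_ifE[simp]: "ev ifE [c, a, b] = (if c \<noteq> 0 then a else b)" by (simp add: ifE_def)

lemma wfe_basic[simp]: "wfe 2 addE" "wfe 2 mulE" "wfe 1 predE" "wfe 2 subE" "wfe 1 sgE"
  "wfe 1 nsgE" "wfe 2 ltE" "wfe 2 eqE" "wfe 2 andE" "wfe 2 orE" "wfe 3 ifE"
  by (simp_all add: addE_def mulE_def predE_def subE_def sgE_def nsgE_def ltE_def eqE_def
      andE_def orE_def ifE_def)

definition bsum :: "nat \<Rightarrow> exp \<Rightarrow> exp" where
  "bsum k body = ER (EV 0) EZ (EC addE [EV 0, EC body (EV 1 # map EV [3..<k+3])])"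
definition "bex k body = EC sgE [bsum k body]"
definition "ball k body = EC nsgE [bsum k (EC nsgE [body])]"

lemma ev_comp_V[simp]: "(\<lambda>e. ev e xs) \<circ> EV = (\<lambda>i. xs ! i)"
  by auto

lemma map_vars: "length ys = m \<Longrightarrow> length xs = k \<Longrightarrow>
   map (\<lambda>e. ev e (ys @ xs)) (map EV [m..<m+k]) = xs"
  by (rule nth_equalityI) (auto simp: nth_append)

lemma ev_bsum[simp]: "length xs = k \<Longrightarrow> ev (bsum k body) (n # xs) = (\<Sum>i<n. ev body (i # xs))"
proof -
  assume len: "length xs = k"
  have mv: "map (\<lambda>j. (a # i # m # xs) ! j) [3..<k+3] = xs" for a i m
    by (rule nth_equalityI) (auto simp: len)
  show ?thesis
    by (induction n) (simp_all add: bsum_def mv)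
qed
  
lemma ev_bex[simp]: "length xs = k \<Longrightarrow> ev (bex k body) (n # xs) = of_bool (\<exists>i<n. ev body (i # xs) \<noteq> 0)"
  by (simp add: bex_def)
lemma ev_ball[simp]: "length xs = k \<Longrightarrow> ev (ball k body) (n # xs) = of_bool (\<forall>i<n. ev body (i # xs) \<noteq> 0)"
  by (simp add: ball_def) (auto simp: disjoint_iff)

lemma wfe_basic'[simp]: "wfe (Suc (Suc 0)) addE" "wfe (Suc (Suc 0)) mulE" "wfe (Suc 0) predE"
  "wfe (Suc (Suc 0)) subE" "wfe (Suc 0) sgE"
  "wfe (Suc 0) nsgE" "wfe (Suc (Suc 0)) ltE" "wfe (Suc (Suc 0)) eqE" "wfe (Suc (Suc 0)) andE"
  "wfe (Suc (Suc 0)) orE" "wfe (Suc (Suc (Suc 0))) ifE"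
  using wfe_basic by (simp_all add: numeral_eq_Suc)

lemma wfe_bsum[simp]: "k' = Suc k \<Longrightarrow> wfe k' body \<Longrightarrow> wfe k' (bsum k body)"
  by (simp add: bsum_def list_all_iff)
lemma wfe_bex[simp]: "k' = Suc k \<Longrightarrow> wfe k' body \<Longrightarrow> wfe k' (bex k body)"
  by (simp add: bex_def)
lemma wfe_ball[simp]: "k' = Suc k \<Longrightarrow> wfe k' body \<Longrightarrow> wfe k' (ball k body)"
  by (simp add: ball_def)




definition "cfst n = fst (prod_decode n)"
definition "csnd n = snd (prod_decode n)"
definition "ctl c = csnd (c - 1)"
definition "cdrop i c = (ctl ^^ i) c"
definition "cnth c i = cfst (cdrop i c - 1)"
definition "clen c = (\<Sum>k<c. of_bool (cdrop k c \<noteq> 0) :: nat)"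
primrec Bnd :: "nat \<Rightarrow> nat \<Rightarrow> nat" where
  "Bnd 0 B = 0"
| "Bnd (Suc L) B = Suc (prod_encode (B, Bnd L B))"

definition "triE = ER (EV 0) EZ (EC addE [EV 0, ES (EV 1)])"
definition "peE = EC addE [EC triE [EC addE [EV 0, EV 1]], EV 0]"
definition "cfstE = EC (bsum 1 (EC (bsum 2 (EC mulE [EV 1, EC eqE [EC peE [EV 1, EV 0], EV 2]])) [ES (EV 1), EV 0, EV 1])) [ES (EV 0), EV 0]"
definition "csndE = EC (bsum 1 (EC (bsum 2 (EC mulE [EV 0, EC eqE [EC peE [EV 1, EV 0], EV 2]])) [ES (EV 1), EV 0, EV 1])) [ES (EV 0), EV 0]"
definition "ctlE = EC csndE [EC predE [EV 0]]"
definition "cdropE = ER (EV 0) (EV 1) (EC ctlE [EV 0])"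
definition "cnthE = EC cfstE [EC predE [EC cdropE [EV 1, EV 0]]]"
definition "clenE = EC (bsum 1 (EC sgE [EC cdropE [EV 0, EV 1]])) [EV 0, EV 0]"
definition "BndE = ER (EV 0) EZ (ES (EC peE [EV 3, EV 0]))"
definition "pow2E = ER (EV 0) (ES EZ) (EC addE [EV 0, EV 0])"

lemma rec_tri: "rec_nat 0 (\<lambda>i acc. Suc (acc + i)) n = triangle n" by (induction n) auto
lemma ev_triE[simp]: "ev triE [n] = triangle n" by (simp add: triE_def rec_tri)
lemma ev_peE[simp]: "ev peE [a, b] = prod_encode (a, b)" by (simp add: peE_def prod_encode_def)

lemma decode_sum:
  "(\<Sum>a<Suc n. \<Sum>b<Suc n. f a b * of_bool (prod_encode (a, b) = n)) = (f (cfst n) (csnd n) :: nat)"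
proof -
  obtain a0 b0 where d: "prod_decode n = (a0, b0)" by (cases "prod_decode n")
  then have n: "n = prod_encode (a0, b0)" by (metis prod_decode_inverse)
  have le: "a0 \<le> n" "b0 \<le> n" using n le_prod_encode_1 le_prod_encode_2 by auto
  have eq: "(prod_encode (a, b) = n) = (a = a0 \<and> b = b0)" for a b
    using n by auto
  have "(\<Sum>a<Suc n. \<Sum>b<Suc n. f a b * of_bool (prod_encode (a, b) = n))
      = (\<Sum>a<Suc n. if a = a0 then (\<Sum>b<Suc n. if b = b0 then f a b else 0) else 0)"
    unfolding eq by (intro sum.cong) auto
  also have "\<dots> = f a0 b0" using le by (simp add: sum.delta)
  finally show ?thesis by (simp add: cfst_def csnd_def d)
qed

lemma ev_cfstE[simp]: "ev cfstE [n] = cfst n"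
  using decode_sum[where n=n and f="\<lambda>a b. a"] by (simp add: cfstE_def)
lemma ev_csndE[simp]: "ev csndE [n] = csnd n"
  using decode_sum[where n=n and f="\<lambda>a b. b"] by (simp add: csndE_def)
lemma ev_ctlE[simp]: "ev ctlE [c] = ctl c" by (simp add: ctlE_def ctl_def)
lemma rec_drop: "rec_nat c (\<lambda>i a. ctl a) i = cdrop i c" by (induction i) (auto simp: cdrop_def)
lemma ev_cdropE[simp]: "ev cdropE [i, c] = cdrop i c" by (simp add: cdropE_def rec_drop)
lemma ev_cnthE[simp]: "ev cnthE [c, i] = cnth c i" by (simp add: cnthE_def cnth_def)
lemma ev_clenE[simp]: "ev clenE [c] = clen c" by (simp add: clenE_def clen_def)
lemma rec_Bnd: "rec_nat 0 (\<lambda>i a. Suc (prod_encode (B, a))) L = Bnd L B" by (induction L) auto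
lemma ev_BndE[simp]: "ev BndE [L, B] = Bnd L B" by (simp add: BndE_def rec_Bnd)
lemma rec_pow2: "rec_nat (Suc 0) (\<lambda>i a. a + a) n = 2 ^ n" by (induction n) auto
lemma ev_pow2E[simp]: "ev pow2E [n] = 2 ^ n" by (simp add: pow2E_def rec_pow2)

lemma wfe_codes[simp]: "wfe (Suc 0) triE" "wfe (Suc (Suc 0)) peE" "wfe (Suc 0) cfstE" "wfe (Suc 0) csndE"
  "wfe (Suc 0) ctlE" "wfe (Suc (Suc 0)) cdropE" "wfe (Suc (Suc 0)) cnthE" "wfe (Suc 0) clenE"
  "wfe (Suc (Suc 0)) BndE" "wfe (Suc 0) pow2E"
proof -
  show 1: "wfe (Suc 0) triE" by (simp add: triE_def)
  show 2: "wfe (Suc (Suc 0)) peE" using 1 by (simp add: peE_def)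
  show 3: "wfe (Suc 0) cfstE" using 2 by (simp add: cfstE_def)
  show 4: "wfe (Suc 0) csndE" using 2 by (simp add: csndE_def)
  show 5: "wfe (Suc 0) ctlE" using 4 by (simp add: ctlE_def)
  show 6: "wfe (Suc (Suc 0)) cdropE" using 5 by (simp add: cdropE_def)
  show "wfe (Suc (Suc 0)) cnthE" using 3 6 by (simp add: cnthE_def)
  show "wfe (Suc 0) clenE" using 6 by (simp add: clenE_def)
  show "wfe (Suc (Suc 0)) BndE" using 2 by (simp add: BndE_def)
  show "wfe (Suc 0) pow2E" by (simp add: pow2E_def)
qed

lemma prod_decode_0: "prod_decode 0 = (0, 0)"
proof -
  have "prod_encode (0, 0) = 0" by (simp add: prod_encode_def)
  then show ?thesis by (metis prod_encode_inverse)
qed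

lemma ctl_Suc[simp]: "ctl (Suc (prod_encode (a, b))) = b"
  by (simp add: ctl_def csnd_def)
lemma ctl_cons: "ctl (list_encode (x # xs)) = list_encode xs"
  by (simp add: ctl_def csnd_def)
lemma ctl_nil[simp]: "ctl (list_encode []) = list_encode []"
  by (simp add: ctl_def csnd_def prod_decode_0)
lemma ctl_0[simp]: "ctl 0 = 0"
  by (simp add: ctl_def csnd_def prod_decode_0)

lemma funpow_ctl_0[simp]: "(ctl ^^ i) 0 = 0"
  by (induction i) auto

lemma cdrop_enc[simp]: "cdrop i (list_encode xs) = list_encode (drop i xs)"
proof (induction i arbitrary: xs)
  case 0
  then show ?case by (simp add: cdrop_def)
next
  case (Suc i)
  then show ?case
    by (cases xs) (auto simp: cdrop_def funpow_Suc_right simp del: funpow.simps)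
qed

lemma cfst_enc[simp]: "cfst (prod_encode (a, b)) = a" by (simp add: cfst_def)
lemma csnd_enc[simp]: "csnd (prod_encode (a, b)) = b" by (simp add: csnd_def)

lemma cnth_enc[simp]: "i < length xs \<Longrightarrow> cnth (list_encode xs) i = xs ! i"
  by (simp add: cnth_def Cons_nth_drop_Suc[symmetric])

lemma length_le_enc: "length xs \<le> list_encode xs"
  by (induction xs) (auto intro: le_trans[OF _ le_prod_encode_2])

lemma list_encode_0_iff: "list_encode xs = 0 \<longleftrightarrow> xs = []"
  by (cases xs) auto

lemma clen_enc[simp]: "clen (list_encode xs) = length xs"
proof -
  have "clen (list_encode xs) = (\<Sum>k<list_encode xs. of_bool (k < length xs))"
    unfolding clen_def by (intro sum.cong) (auto simp: list_encode_0_iff)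
  also have "\<dots> = card ({..<list_encode xs} \<inter> {k. k < length xs})"
    by (simp add: sum.inter_filter[symmetric] Int_def)
  also have "{..<list_encode xs} \<inter> {k. k < length xs} = {..<length xs}"
    using length_le_enc[of xs] by auto
  finally show ?thesis by simp
qed

lemma elem_le_enc: "x \<in> set xs \<Longrightarrow> x \<le> list_encode xs"
proof (induction xs)
  case Nil then show ?case by simp
next
  case (Cons a xs)
  then show ?case
    using le_prod_encode_1[of a "list_encode xs"] le_prod_encode_2[of "list_encode xs" a] by auto
qed

lemma nth_le_enc: "i < length xs \<Longrightarrow> xs ! i \<le> list_encode xs"
  by (simp add: elem_le_enc)

lemma prod_encode_mono: "a \<le> a' \<Longrightarrow> b \<le> b' \<Longrightarrow> prod_encode (a, b) \<le> prod_encode (a', b')"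
proof -
  assume "a \<le> a'" "b \<le> b'"
  moreover have "triangle m \<le> triangle n" if "m \<le> n" for m n
    using that by (induction n) (auto simp: le_Suc_eq)
  ultimately show ?thesis by (simp add: prod_encode_def add_mono)
qed

lemma Bnd_mono: "L \<le> L' \<Longrightarrow> Bnd L B \<le> Bnd L' B"
proof (induction L' arbitrary: L)
  case 0 then show ?case by simp
next
  case (Suc L')
  have "Bnd L' B \<le> Bnd (Suc L') B" using le_prod_encode_2[of "Bnd L' B" B] by simp
  show ?case
  proof (cases "L = Suc L'")
    case False
    then have "L \<le> L'" using Suc.prems by auto
    then show ?thesis using Suc.IH \<open>Bnd L' B \<le> Bnd (Suc L') B\<close> le_trans by blast
  qed simp
qed

lemma enc_le_Bnd:
  "length xs \<le> L \<Longrightarrow> (\<forall>x\<in>set xs. x \<le> B) \<Longrightarrow> list_encode xs \<le> Bnd L B"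
proof (induction xs arbitrary: L)
  case Nil then show ?case by simp
next
  case (Cons a xs)
  then obtain L' where L: "L = Suc L'" by (cases L) auto
  then have "list_encode xs \<le> Bnd L' B" using Cons by auto
  then show ?case using Cons.prems L by (auto intro: prod_encode_mono)
qed




definition nN :: "nat \<Rightarrow> nat" where "nN x = (cfst (cfst x))"
definition "nNE = EC cfstE [EC cfstE [EV 0]]"
lemma ev_nNE[simp]: "ev nNE [x] = nN x"
  by (simp add: nNE_def nN_def)
lemma wfe_nNE[simp]: "wfe (Suc 0) nNE"
  by (simp add: nNE_def)

definition ne :: "nat \<Rightarrow> nat" where "ne x = (clen (cfst (csnd (cfst x))))"
definition "neE = EC clenE [EC cfstE [EC csndE [EC cfstE [EV 0]]]]"
lemma ev_neE[simp]: "ev neE [x] = ne x"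
  by (simp add: neE_def ne_def)
lemma wfe_neE[simp]: "wfe (Suc 0) neE"
  by (simp add: neE_def)

definition msg :: "nat \<Rightarrow> nat \<Rightarrow> nat" where "msg x d = (cnth (cfst (csnd (csnd (cfst x)))) d)"
definition "msgE = EC cnthE [EC cfstE [EC csndE [EC csndE [EC cfstE [EV 0]]]], EV 1]"
lemma ev_msgE[simp]: "ev msgE [x, d] = msg x d"
  by (simp add: msgE_def msg_def)
lemma wfe_msgE[simp]: "wfe (Suc (Suc 0)) msgE"
  by (simp add: msgE_def)

definition Fcx :: "nat \<Rightarrow> nat" where "Fcx x = (csnd x)"
definition "FcxE = EC csndE [EV 0]"
lemma ev_FcxE[simp]: "ev FcxE [x] = Fcx x"
  by (simp add: FcxE_def Fcx_def)
lemma wfe_FcxE[simp]: "wfe (Suc 0) FcxE"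
  by (simp add: FcxE_def)

definition Tcx :: "nat \<Rightarrow> nat \<Rightarrow> nat" where "Tcx x j = (csnd (csnd (cnth (csnd (csnd (csnd (cfst x)))) j)))"
definition "TcxE = EC csndE [EC csndE [EC cnthE [EC csndE [EC csndE [EC csndE [EC cfstE [EV 0]]]], EV 1]]]"
lemma ev_TcxE[simp]: "ev TcxE [x, j] = Tcx x j"
  by (simp add: TcxE_def Tcx_def)
lemma wfe_TcxE[simp]: "wfe (Suc (Suc 0)) TcxE"
  by (simp add: TcxE_def)

definition mst :: "nat \<Rightarrow> nat \<Rightarrow> nat" where "mst x j = (cfst (cnth (csnd (csnd (csnd (cfst x)))) j))"
definition "mstE = EC cfstE [EC cnthE [EC csndE [EC csndE [EC csndE [EC cfstE [EV 0]]]], EV 1]]"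
lemma ev_mstE[simp]: "ev mstE [x, j] = mst x j"
  by (simp add: mstE_def mst_def)
lemma wfe_mstE[simp]: "wfe (Suc (Suc 0)) mstE"
  by (simp add: mstE_def)

definition trc :: "nat \<Rightarrow> nat \<Rightarrow> nat \<Rightarrow> nat" where "trc x j t = (cnth (Tcx x j) t)"
definition "trcE = EC cnthE [EC TcxE [EV 0, EV 1], EV 2]"
lemma ev_trcE[simp]: "ev trcE [x, j, t] = trc x j t"
  by (simp add: trcE_def trc_def)
lemma wfe_trcE[simp]: "wfe (Suc (Suc (Suc 0))) trcE"
  by (simp add: trcE_def)

definition tp :: "nat \<Rightarrow> nat \<Rightarrow> nat \<Rightarrow> nat" where "tp x j t = (cfst (trc x j t))"
definition "tpE = EC cfstE [trcE]"
lemma ev_tpE[simp]: "ev tpE [x, j, t] = tp x j t"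
  by (simp add: tpE_def tp_def)
lemma wfe_tpE[simp]: "wfe (Suc (Suc (Suc 0))) tpE"
  by (simp add: tpE_def)

definition tq :: "nat \<Rightarrow> nat \<Rightarrow> nat \<Rightarrow> nat" where "tq x j t = (csnd (csnd (trc x j t)))"
definition "tqE = EC csndE [EC csndE [trcE]]"
lemma ev_tqE[simp]: "ev tqE [x, j, t] = tq x j t"
  by (simp add: tqE_def tq_def)
lemma wfe_tqE[simp]: "wfe (Suc (Suc (Suc 0))) tqE"
  by (simp add: tqE_def)

definition ts :: "nat \<Rightarrow> nat \<Rightarrow> nat \<Rightarrow> nat" where "ts x j t = (cfst (cfst (csnd (trc x j t))))"
definition "tsE = EC cfstE [EC cfstE [EC csndE [trcE]]]"
lemma ev_tsE[simp]: "ev tsE [x, j, t] = ts x j t"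
  by (simp add: tsE_def ts_def)
lemma wfe_tsE[simp]: "wfe (Suc (Suc (Suc 0))) tsE"
  by (simp add: tsE_def)

definition te :: "nat \<Rightarrow> nat \<Rightarrow> nat \<Rightarrow> nat" where "te x j t = (cfst (csnd (cfst (csnd (trc x j t)))))"
definition "teE = EC cfstE [EC csndE [EC cfstE [EC csndE [trcE]]]]"
lemma ev_teE[simp]: "ev teE [x, j, t] = te x j t"
  by (simp add: teE_def te_def)
lemma wfe_teE[simp]: "wfe (Suc (Suc (Suc 0))) teE"
  by (simp add: teE_def)

definition tb :: "nat \<Rightarrow> nat \<Rightarrow> nat \<Rightarrow> nat" where "tb x j t = (csnd (csnd (cfst (csnd (trc x j t)))))"
definition "tbE = EC csndE [EC csndE [EC cfstE [EC csndE [trcE]]]]"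
lemma ev_tbE[simp]: "ev tbE [x, j, t] = tb x j t"
  by (simp add: tbE_def tb_def)
lemma wfe_tbE[simp]: "wfe (Suc (Suc (Suc 0))) tbE"
  by (simp add: tbE_def)

definition wlen :: "nat \<Rightarrow> nat \<Rightarrow> nat \<Rightarrow> nat" where "wlen wc dr ap = (clen wc - dr + ap)"
definition "wlenE = EC addE [EC subE [EC clenE [EV 0], EV 1], EV 2]"
lemma ev_wlenE[simp]: "ev wlenE [wc, dr, ap] = wlen wc dr ap"
  by (simp add: wlenE_def wlen_def)
lemma wfe_wlenE[simp]: "wfe (Suc (Suc (Suc 0))) wlenE"
  by (simp add: wlenE_def)

definition wlet :: "nat \<Rightarrow> nat \<Rightarrow> nat \<Rightarrow> nat \<Rightarrow> nat" where "wlet wc dr b k = ((if k + dr < clen wc then cnth wc (k + dr) else b))"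
definition "wletE = EC ifE [EC ltE [EC addE [EV 3, EV 1], EC clenE [EV 0]], EC cnthE [EV 0, EC addE [EV 3, EV 1]], EV 2]"
lemma ev_wletE[simp]: "ev wletE [wc, dr, b, k] = wlet wc dr b k"
  by (simp add: wletE_def wlet_def)
lemma wfe_wletE[simp]: "wfe (Suc (Suc (Suc (Suc 0)))) wletE"
  by (simp add: wletE_def)

definition stepb :: "nat \<Rightarrow> nat \<Rightarrow> nat \<Rightarrow> nat \<Rightarrow> nat \<Rightarrow> nat \<Rightarrow> nat \<Rightarrow> bool" where "stepb t NTc sqc wc dr b k = (cnth NTc t = prod_encode (cnth sqc k, prod_encode (wlet wc dr b k, cnth sqc (Suc k))))"
definition "stepbE = EC eqE [EC cnthE [EV 1, EV 0], EC peE [EC cnthE [EV 2, EV 6], EC peE [EC wletE [EV 3, EV 4, EV 5, EV 6], EC cnthE [EV 2, ES (EV 6)]]]]"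
lemma ev_stepbE[simp]: "ev stepbE [t, NTc, sqc, wc, dr, b, k] = of_bool (stepb t NTc sqc wc dr b k)"
  by (simp add: stepbE_def stepb_def)
lemma wfe_stepbE[simp]: "wfe (Suc (Suc (Suc (Suc (Suc (Suc (Suc 0))))))) stepbE"
  by (simp add: stepbE_def)

definition step_ok :: "nat \<Rightarrow> nat \<Rightarrow> nat \<Rightarrow> nat \<Rightarrow> nat \<Rightarrow> nat \<Rightarrow> bool" where "step_ok NTc sqc wc dr b k = (\<exists>t<clen NTc. stepb t NTc sqc wc dr b k)"
definition "step_okE = EC (bex 6 stepbE) [EC clenE [EV 0], EV 0, EV 1, EV 2, EV 3, EV 4, EV 5]"
lemma ev_step_okE[simp]: "ev step_okE [NTc, sqc, wc, dr, b, k] = of_bool (step_ok NTc sqc wc dr b k)"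
  by (simp add: step_okE_def step_ok_def)
lemma wfe_step_okE[simp]: "wfe (Suc (Suc (Suc (Suc (Suc (Suc 0)))))) step_okE"
  by (simp add: step_okE_def)

definition seqb :: "nat \<Rightarrow> nat \<Rightarrow> nat \<Rightarrow> nat \<Rightarrow> nat \<Rightarrow> nat \<Rightarrow> bool" where "seqb k NTc sqc wc dr b = (step_ok NTc sqc wc dr b k)"
definition "seqbE = EC step_okE [EV 1, EV 2, EV 3, EV 4, EV 5, EV 0]"
lemma ev_seqbE[simp]: "ev seqbE [k, NTc, sqc, wc, dr, b] = of_bool (seqb k NTc sqc wc dr b)"
  by (simp add: seqbE_def seqb_def)
lemma wfe_seqbE[simp]: "wfe (Suc (Suc (Suc (Suc (Suc (Suc 0)))))) seqbE"
  by (simp add: seqbE_def)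

definition seq_ok :: "nat \<Rightarrow> nat \<Rightarrow> nat \<Rightarrow> nat \<Rightarrow> nat \<Rightarrow> nat \<Rightarrow> nat \<Rightarrow> nat \<Rightarrow> bool" where "seq_ok sqc NTc p q wc dr ap b = (clen sqc = Suc (wlen wc dr ap) \<and> cnth sqc 0 = p \<and> cnth sqc (wlen wc dr ap) = q \<and> (\<forall>k<wlen wc dr ap. seqb k NTc sqc wc dr b))"
definition "seq_okE = EC andE [EC eqE [EC clenE [EV 0], ES (EC wlenE [EV 4, EV 5, EV 6])], EC andE [EC eqE [EC cnthE [EV 0, EZ], EV 2], EC andE [EC eqE [EC cnthE [EV 0, EC wlenE [EV 4, EV 5, EV 6]], EV 3], EC (ball 5 seqbE) [EC wlenE [EV 4, EV 5, EV 6], EV 1, EV 0, EV 4, EV 5, EV 7]]]]"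
lemma ev_seq_okE[simp]: "ev seq_okE [sqc, NTc, p, q, wc, dr, ap, b] = of_bool (seq_ok sqc NTc p q wc dr ap b)"
  by (simp add: seq_okE_def seq_ok_def)
lemma wfe_seq_okE[simp]: "wfe (Suc (Suc (Suc (Suc (Suc (Suc (Suc (Suc 0)))))))) seq_okE"
  by (simp add: seq_okE_def)

definition run_c :: "nat \<Rightarrow> nat \<Rightarrow> nat \<Rightarrow> nat \<Rightarrow> nat \<Rightarrow> nat \<Rightarrow> nat \<Rightarrow> bool" where "run_c NTc p q wc dr ap b = (\<exists>sqc<Suc (Bnd (Suc (wlen wc dr ap)) (p + NTc)). seq_ok sqc NTc p q wc dr ap b)"
definition "run_cE = EC (bex 7 seq_okE) [ES (EC BndE [ES (EC wlenE [EV 3, EV 4, EV 5]), EC addE [EV 1, EV 0]]), EV 0, EV 1, EV 2, EV 3, EV 4, EV 5, EV 6]"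
lemma ev_run_cE[simp]: "ev run_cE [NTc, p, q, wc, dr, ap, b] = of_bool (run_c NTc p q wc dr ap b)"
  by (simp add: run_cE_def run_c_def)
lemma wfe_run_cE[simp]: "wfe (Suc (Suc (Suc (Suc (Suc (Suc (Suc 0))))))) run_cE"
  by (simp add: run_cE_def)

definition accb2 :: "nat \<Rightarrow> nat \<Rightarrow> nat \<Rightarrow> nat \<Rightarrow> nat \<Rightarrow> nat \<Rightarrow> nat \<Rightarrow> bool" where "accb2 iq ip ac wc dr ap b = (run_c (csnd (csnd (csnd ac))) (cnth (cfst (csnd ac)) ip) (cnth (cfst (csnd (csnd ac))) iq) wc dr ap b)"
definition "accb2E = EC run_cE [EC csndE [EC csndE [EC csndE [EV 2]]], EC cnthE [EC cfstE [EC csndE [EV 2]], EV 1], EC cnthE [EC cfstE [EC csndE [EC csndE [EV 2]]], EV 0], EV 3, EV 4, EV 5, EV 6]"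
lemma ev_accb2E[simp]: "ev accb2E [iq, ip, ac, wc, dr, ap, b] = of_bool (accb2 iq ip ac wc dr ap b)"
  by (simp add: accb2E_def accb2_def)
lemma wfe_accb2E[simp]: "wfe (Suc (Suc (Suc (Suc (Suc (Suc (Suc 0))))))) accb2E"
  by (simp add: accb2E_def)

definition accb1 :: "nat \<Rightarrow> nat \<Rightarrow> nat \<Rightarrow> nat \<Rightarrow> nat \<Rightarrow> nat \<Rightarrow> bool" where "accb1 ip ac wc dr ap b = (\<exists>iq<clen (cfst (csnd (csnd ac))). accb2 iq ip ac wc dr ap b)"
definition "accb1E = EC (bex 6 accb2E) [EC clenE [EC cfstE [EC csndE [EC csndE [EV 1]]]], EV 0, EV 1, EV 2, EV 3, EV 4, EV 5]"
lemma ev_accb1E[simp]: "ev accb1E [ip, ac, wc, dr, ap, b] = of_bool (accb1 ip ac wc dr ap b)"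
  by (simp add: accb1E_def accb1_def)
lemma wfe_accb1E[simp]: "wfe (Suc (Suc (Suc (Suc (Suc (Suc 0)))))) accb1E"
  by (simp add: accb1E_def)

definition acc_c :: "nat \<Rightarrow> nat \<Rightarrow> nat \<Rightarrow> nat \<Rightarrow> nat \<Rightarrow> bool" where "acc_c ac wc dr ap b = (\<exists>ip<clen (cfst (csnd ac)). accb1 ip ac wc dr ap b)"
definition "acc_cE = EC (bex 5 accb1E) [EC clenE [EC cfstE [EC csndE [EV 0]]], EV 0, EV 1, EV 2, EV 3, EV 4]"
lemma ev_acc_cE[simp]: "ev acc_cE [ac, wc, dr, ap, b] = of_bool (acc_c ac wc dr ap b)"
  by (simp add: acc_cE_def acc_c_def)
lemma wfe_acc_cE[simp]: "wfe (Suc (Suc (Suc (Suc (Suc 0))))) acc_cE"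
  by (simp add: acc_cE_def)

definition drd :: "nat \<Rightarrow> nat \<Rightarrow> nat \<Rightarrow> nat" where "drd d e v = ((if d = e then v else 0))"
definition "drdE = EC ifE [EC eqE [EV 0, EV 1], EV 2, EZ]"
lemma ev_drdE[simp]: "ev drdE [d, e, v] = drd d e v"
  by (simp add: drdE_def drd_def)
lemma wfe_drdE[simp]: "wfe (Suc (Suc (Suc 0))) drdE"
  by (simp add: drdE_def)

definition vcb2 :: "nat \<Rightarrow> nat \<Rightarrow> nat \<Rightarrow> nat \<Rightarrow> nat \<Rightarrow> nat \<Rightarrow> nat \<Rightarrow> nat \<Rightarrow> nat \<Rightarrow> bool" where "vcb2 k d x Rc cc e dr ap b = (wlet (cnth cc d) (drd d e dr) b k < msg x d)"
definition "vcb2E = EC ltE [EC wletE [EC cnthE [EV 4, EV 1], EC drdE [EV 1, EV 5, EV 6], EV 8, EV 0], EC msgE [EV 2, EV 1]]"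
lemma ev_vcb2E[simp]: "ev vcb2E [k, d, x, Rc, cc, e, dr, ap, b] = of_bool (vcb2 k d x Rc cc e dr ap b)"
  by (simp add: vcb2E_def vcb2_def)
lemma wfe_vcb2E[simp]: "wfe (Suc (Suc (Suc (Suc (Suc (Suc (Suc (Suc (Suc 0))))))))) vcb2E"
  by (simp add: vcb2E_def)

definition vcb1 :: "nat \<Rightarrow> nat \<Rightarrow> nat \<Rightarrow> nat \<Rightarrow> nat \<Rightarrow> nat \<Rightarrow> nat \<Rightarrow> nat \<Rightarrow> bool" where "vcb1 d x Rc cc e dr ap b = (\<forall>k<wlen (cnth cc d) (drd d e dr) (drd d e ap). vcb2 k d x Rc cc e dr ap b)"
definition "vcb1E = EC (ball 8 vcb2E) [EC wlenE [EC cnthE [EV 3, EV 0], EC drdE [EV 0, EV 4, EV 5], EC drdE [EV 0, EV 4, EV 6]], EV 0, EV 1, EV 2, EV 3, EV 4, EV 5, EV 6, EV 7]"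
lemma ev_vcb1E[simp]: "ev vcb1E [d, x, Rc, cc, e, dr, ap, b] = of_bool (vcb1 d x Rc cc e dr ap b)"
  by (simp add: vcb1E_def vcb1_def)
lemma wfe_vcb1E[simp]: "wfe (Suc (Suc (Suc (Suc (Suc (Suc (Suc (Suc 0)))))))) vcb1E"
  by (simp add: vcb1E_def)

definition prb2 :: "nat \<Rightarrow> nat \<Rightarrow> nat \<Rightarrow> nat \<Rightarrow> nat \<Rightarrow> nat \<Rightarrow> nat \<Rightarrow> nat \<Rightarrow> nat \<Rightarrow> bool" where "prb2 d i x Rc cc e dr ap b = (acc_c (cnth (cnth Rc i) d) (cnth cc d) (drd d e dr) (drd d e ap) b)"
definition "prb2E = EC acc_cE [EC cnthE [EC cnthE [EV 3, EV 1], EV 0], EC cnthE [EV 4, EV 0], EC drdE [EV 0, EV 5, EV 6], EC drdE [EV 0, EV 5, EV 7], EV 8]"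
lemma ev_prb2E[simp]: "ev prb2E [d, i, x, Rc, cc, e, dr, ap, b] = of_bool (prb2 d i x Rc cc e dr ap b)"
  by (simp add: prb2E_def prb2_def)
lemma wfe_prb2E[simp]: "wfe (Suc (Suc (Suc (Suc (Suc (Suc (Suc (Suc (Suc 0))))))))) prb2E"
  by (simp add: prb2E_def)

definition prb1 :: "nat \<Rightarrow> nat \<Rightarrow> nat \<Rightarrow> nat \<Rightarrow> nat \<Rightarrow> nat \<Rightarrow> nat \<Rightarrow> nat \<Rightarrow> bool" where "prb1 i x Rc cc e dr ap b = (clen (cnth Rc i) = ne x \<and> (\<forall>d<ne x. prb2 d i x Rc cc e dr ap b))"
definition "prb1E = EC andE [EC eqE [EC clenE [EC cnthE [EV 2, EV 0]], EC neE [EV 1]], EC (ball 8 prb2E) [EC neE [EV 1], EV 0, EV 1, EV 2, EV 3, EV 4, EV 5, EV 6, EV 7]]"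
lemma ev_prb1E[simp]: "ev prb1E [i, x, Rc, cc, e, dr, ap, b] = of_bool (prb1 i x Rc cc e dr ap b)"
  by (simp add: prb1E_def prb1_def)
lemma wfe_prb1E[simp]: "wfe (Suc (Suc (Suc (Suc (Suc (Suc (Suc (Suc 0)))))))) prb1E"
  by (simp add: prb1E_def)

definition relmem_c :: "nat \<Rightarrow> nat \<Rightarrow> nat \<Rightarrow> nat \<Rightarrow> nat \<Rightarrow> nat \<Rightarrow> nat \<Rightarrow> bool" where "relmem_c x Rc cc e dr ap b = (clen cc = ne x \<and> (\<forall>d<ne x. vcb1 d x Rc cc e dr ap b) \<and> (\<exists>i<clen Rc. prb1 i x Rc cc e dr ap b))"
definition "relmem_cE = EC andE [EC eqE [EC clenE [EV 2], EC neE [EV 0]], EC andE [EC (ball 7 vcb1E) [EC neE [EV 0], EV 0, EV 1, EV 2, EV 3, EV 4, EV 5, EV 6], EC (bex 7 prb1E) [EC clenE [EV 1], EV 0, EV 1, EV 2, EV 3, EV 4, EV 5, EV 6]]]"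
lemma ev_relmem_cE[simp]: "ev relmem_cE [x, Rc, cc, e, dr, ap, b] = of_bool (relmem_c x Rc cc e dr ap b)"
  by (simp add: relmem_cE_def relmem_c_def)
lemma wfe_relmem_cE[simp]: "wfe (Suc (Suc (Suc (Suc (Suc (Suc (Suc 0))))))) relmem_cE"
  by (simp add: relmem_cE_def)

definition keyb2 :: "nat \<Rightarrow> nat \<Rightarrow> nat \<Rightarrow> nat \<Rightarrow> nat \<Rightarrow> nat \<Rightarrow> bool" where "keyb2 i' i x sc j q = (cnth (cfst (cnth (Fcx x) i)) i' = (if i' = j then q else cnth sc i'))"
definition "keyb2E = EC eqE [EC cnthE [EC cfstE [EC cnthE [EC FcxE [EV 2], EV 1]], EV 0], EC ifE [EC eqE [EV 0, EV 4], EV 5, EC cnthE [EV 3, EV 0]]]"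
lemma ev_keyb2E[simp]: "ev keyb2E [i', i, x, sc, j, q] = of_bool (keyb2 i' i x sc j q)"
  by (simp add: keyb2E_def keyb2_def)
lemma wfe_keyb2E[simp]: "wfe (Suc (Suc (Suc (Suc (Suc (Suc 0)))))) keyb2E"
  by (simp add: keyb2E_def)

definition keym :: "nat \<Rightarrow> nat \<Rightarrow> nat \<Rightarrow> nat \<Rightarrow> nat \<Rightarrow> bool" where "keym i x sc j q = (clen (cfst (cnth (Fcx x) i)) = nN x \<and> (\<forall>i'<nN x. keyb2 i' i x sc j q))"
definition "keymE = EC andE [EC eqE [EC clenE [EC cfstE [EC cnthE [EC FcxE [EV 1], EV 0]]], EC nNE [EV 1]], EC (ball 5 keyb2E) [EC nNE [EV 1], EV 0, EV 1, EV 2, EV 3, EV 4]]"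
lemma ev_keymE[simp]: "ev keymE [i, x, sc, j, q] = of_bool (keym i x sc j q)"
  by (simp add: keymE_def keym_def)
lemma wfe_keymE[simp]: "wfe (Suc (Suc (Suc (Suc (Suc 0))))) keymE"
  by (simp add: keymE_def)

definition nkb :: "nat \<Rightarrow> nat \<Rightarrow> nat \<Rightarrow> nat \<Rightarrow> nat \<Rightarrow> nat \<Rightarrow> bool" where "nkb i' i x sc j q = (\<not> keym i' x sc j q)"
definition "nkbE = EC nsgE [EC keymE [EV 0, EV 2, EV 3, EV 4, EV 5]]"
lemma ev_nkbE[simp]: "ev nkbE [i', i, x, sc, j, q] = of_bool (nkb i' i x sc j q)"
  by (simp add: nkbE_def nkb_def)
lemma wfe_nkbE[simp]: "wfe (Suc (Suc (Suc (Suc (Suc (Suc 0)))))) nkbE"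
  by (simp add: nkbE_def)

definition lkb :: "nat \<Rightarrow> nat \<Rightarrow> nat \<Rightarrow> nat \<Rightarrow> nat \<Rightarrow> bool" where "lkb i x sc j q = (\<forall>i'<Suc i. nkb i' i x sc j q)"
definition "lkbE = EC (ball 5 nkbE) [ES (EV 0), EV 0, EV 1, EV 2, EV 3, EV 4]"
lemma ev_lkbE[simp]: "ev lkbE [i, x, sc, j, q] = of_bool (lkb i x sc j q)"
  by (simp add: lkbE_def lkb_def)
lemma wfe_lkbE[simp]: "wfe (Suc (Suc (Suc (Suc (Suc 0))))) lkbE"
  by (simp add: lkbE_def)

definition lk_idx :: "nat \<Rightarrow> nat \<Rightarrow> nat \<Rightarrow> nat \<Rightarrow> nat" where "lk_idx x sc j q = ((\<Sum>i<clen (Fcx x). of_bool (lkb i x sc j q)))"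
definition "lk_idxE = EC (bsum 4 lkbE) [EC clenE [EC FcxE [EV 0]], EV 0, EV 1, EV 2, EV 3]"
lemma ev_lk_idxE[simp]: "ev lk_idxE [x, sc, j, q] = lk_idx x sc j q"
  by (simp add: lk_idxE_def lk_idx_def)
lemma wfe_lk_idxE[simp]: "wfe (Suc (Suc (Suc (Suc 0)))) lk_idxE"
  by (simp add: lk_idxE_def)

definition lookup :: "nat \<Rightarrow> nat \<Rightarrow> nat \<Rightarrow> nat \<Rightarrow> nat" where "lookup x sc j q = ((if lk_idx x sc j q < clen (Fcx x) then csnd (cnth (Fcx x) (lk_idx x sc j q)) else 0))"
definition "lookupE = EC ifE [EC ltE [lk_idxE, EC clenE [EC FcxE [EV 0]]], EC csndE [EC cnthE [EC FcxE [EV 0], lk_idxE]], EZ]"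
lemma ev_lookupE[simp]: "ev lookupE [x, sc, j, q] = lookup x sc j q"
  by (simp add: lookupE_def lookup_def)
lemma wfe_lookupE[simp]: "wfe (Suc (Suc (Suc (Suc 0)))) lookupE"
  by (simp add: lookupE_def)

definition vsb :: "nat \<Rightarrow> nat \<Rightarrow> nat \<Rightarrow> bool" where "vsb i x sc = (cnth sc i < mst x i)"
definition "vsbE = EC ltE [EC cnthE [EV 2, EV 0], EC mstE [EV 1, EV 0]]"
lemma ev_vsbE[simp]: "ev vsbE [i, x, sc] = of_bool (vsb i x sc)"
  by (simp add: vsbE_def vsb_def)
lemma wfe_vsbE[simp]: "wfe (Suc (Suc (Suc 0))) vsbE"
  by (simp add: vsbE_def)

definition CEc :: "nat \<Rightarrow> nat \<Rightarrow> nat \<Rightarrow> nat \<Rightarrow> nat \<Rightarrow> bool" where "CEc x sc cc j t = (j < nN x \<and> t < clen (Tcx x j) \<and> tp x j t = cnth sc j \<and> clen sc = nN x \<and> (\<forall>i<nN x. vsb i x sc) \<and> relmem_c x (lookup x sc j (cnth sc j)) cc (te x j t) 0 0 (tb x j t) \<and> (if ts x j t \<noteq> 0 then \<not> relmem_c x (lookup x sc j (tq x j t)) cc (te x j t) 0 1 (tb x j t) else clen (cnth cc (te x j t)) \<noteq> 0 \<and> cnth (cnth cc (te x j t)) 0 = tb x j t \<and> \<not> relmem_c x (lookup x sc j (tq x j t)) cc (te x j t) 1 0 (tb x j t)))"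
definition "CEcE = EC andE [EC ltE [EV 3, EC nNE [EV 0]], EC andE [EC ltE [EV 4, EC clenE [EC TcxE [EV 0, EV 3]]], EC andE [EC eqE [EC tpE [EV 0, EV 3, EV 4], EC cnthE [EV 1, EV 3]], EC andE [EC eqE [EC clenE [EV 1], EC nNE [EV 0]], EC andE [EC (ball 2 vsbE) [EC nNE [EV 0], EV 0, EV 1], EC andE [EC relmem_cE [EV 0, EC lookupE [EV 0, EV 1, EV 3, EC cnthE [EV 1, EV 3]], EV 2, EC teE [EV 0, EV 3, EV 4], EZ, EZ, EC tbE [EV 0, EV 3, EV 4]], EC ifE [EC tsE [EV 0, EV 3, EV 4], EC nsgE [EC relmem_cE [EV 0, EC lookupE [EV 0, EV 1, EV 3, EC tqE [EV 0, EV 3, EV 4]], EV 2, EC teE [EV 0, EV 3, EV 4], EZ, ES EZ, EC tbE [EV 0, EV 3, EV 4]]], EC andE [EC sgE [EC clenE [EC cnthE [EV 2, EC teE [EV 0, EV 3, EV 4]]]], EC andE [EC eqE [EC cnthE [EC cnthE [EV 2, EC teE [EV 0, EV 3, EV 4]], EZ], EC tbE [EV 0, EV 3, EV 4]], EC nsgE [EC relmem_cE [EV 0, EC lookupE [EV 0, EV 1, EV 3, EC tqE [EV 0, EV 3, EV 4]], EV 2, EC teE [EV 0, EV 3, EV 4], ES EZ, EZ, EC tbE [EV 0, EV 3, EV 4]]]]]]]]]]]]"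
lemma ev_CEcE[simp]: "ev CEcE [x, sc, cc, j, t] = of_bool (CEc x sc cc j t)"
  by (simp add: CEcE_def CEc_def)
lemma wfe_CEcE[simp]: "wfe (Suc (Suc (Suc (Suc (Suc 0))))) CEcE"
  by (simp add: CEcE_def)

definition d4 :: "nat \<Rightarrow> nat \<Rightarrow> nat \<Rightarrow> nat \<Rightarrow> nat \<Rightarrow> bool" where "d4 t j cc sc x = (CEc x sc cc j t)"
definition "d4E = EC CEcE [EV 4, EV 3, EV 2, EV 1, EV 0]"
lemma ev_d4E[simp]: "ev d4E [t, j, cc, sc, x] = of_bool (d4 t j cc sc x)"
  by (simp add: d4E_def d4_def)
lemma wfe_d4E[simp]: "wfe (Suc (Suc (Suc (Suc (Suc 0))))) d4E"
  by (simp add: d4E_def)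

definition d3 :: "nat \<Rightarrow> nat \<Rightarrow> nat \<Rightarrow> nat \<Rightarrow> bool" where "d3 j cc sc x = (\<exists>t<clen (Tcx x j). d4 t j cc sc x)"
definition "d3E = EC (bex 4 d4E) [EC clenE [EC TcxE [EV 3, EV 0]], EV 0, EV 1, EV 2, EV 3]"
lemma ev_d3E[simp]: "ev d3E [j, cc, sc, x] = of_bool (d3 j cc sc x)"
  by (simp add: d3E_def d3_def)
lemma wfe_d3E[simp]: "wfe (Suc (Suc (Suc (Suc 0)))) d3E"
  by (simp add: d3E_def)

definition d2 :: "nat \<Rightarrow> nat \<Rightarrow> nat \<Rightarrow> bool" where "d2 cc sc x = (\<exists>j<nN x. d3 j cc sc x)"
definition "d2E = EC (bex 3 d3E) [EC nNE [EV 2], EV 0, EV 1, EV 2]"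
lemma ev_d2E[simp]: "ev d2E [cc, sc, x] = of_bool (d2 cc sc x)"
  by (simp add: d2E_def d2_def)
lemma wfe_d2E[simp]: "wfe (Suc (Suc (Suc 0))) d2E"
  by (simp add: d2E_def)

definition NW :: "nat \<Rightarrow> nat" where "NW x = (Suc (4 * 2 ^ (Suc x * (Suc x * Suc x))))"
definition "NWE = ES (EC mulE [ES (ES (ES (ES EZ))), EC pow2E [EC mulE [ES (EV 0), EC mulE [ES (EV 0), ES (EV 0)]]]])"
lemma ev_NWE[simp]: "ev NWE [x] = NW x"
  by (simp add: NWE_def NW_def)
lemma wfe_NWE[simp]: "wfe (Suc 0) NWE"
  by (simp add: NWE_def)

definition d1 :: "nat \<Rightarrow> nat \<Rightarrow> bool" where "d1 sc x = (\<exists>cc<Suc (Bnd x (Bnd (NW x) x)). d2 cc sc x)"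
definition "d1E = EC (bex 2 d2E) [ES (EC BndE [EV 1, EC BndE [EC NWE [EV 1], EV 1]]), EV 0, EV 1]"
lemma ev_d1E[simp]: "ev d1E [sc, x] = of_bool (d1 sc x)"
  by (simp add: d1E_def d1_def)
lemma wfe_d1E[simp]: "wfe (Suc (Suc 0)) d1E"
  by (simp add: d1E_def)

definition d0 :: "nat \<Rightarrow> bool" where "d0 x = (\<exists>sc<Suc (Bnd x x). d1 sc x)"
definition "d0E = EC (bex 1 d1E) [ES (EC BndE [EV 0, EV 0]), EV 0]"
lemma ev_d0E[simp]: "ev d0E [x] = of_bool (d0 x)"
  by (simp add: d0E_def d0_def)
lemma wfe_d0E[simp]: "wfe (Suc 0) d0E"
  by (simp add: d0E_def)

definition Dfun :: "nat \<Rightarrow> nat" where "Dfun x = (of_bool (\<not> d0 x))"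
definition "DfunE = EC nsgE [d0E]"
lemma ev_DfunE[simp]: "ev DfunE [x] = Dfun x"
  by (simp add: DfunE_def Dfun_def)
lemma wfe_DfunE[simp]: "wfe (Suc 0) DfunE"
  by (simp add: DfunE_def)




definition ce :: "protocol \<Rightarrow> family \<Rightarrow> nat list \<Rightarrow> nat list list \<Rightarrow> nat list \<Rightarrow> nat list list \<Rightarrow> bool" where
  "ce P fam S C S' C' \<longleftrightarrow> valid_comp P S \<and> rel_mem P (fam_rel fam S) C \<and> step P (S, C) (S', C')
     \<and> \<not> rel_mem P (fam_rel fam S') C'"

lemma step_valid_comp:
  assumes wf: "wf_protocol P" and st: "step P (S, C) (S', C')" and v: "valid_comp P S"
  shows "valid_comp P S'"
  using st
proof cases
  case (send j p e b q)
  then have "q < m_states (p_machs P ! j)" using wf unfolding wf_protocol_def by fastforce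
  then show ?thesis using v send unfolding valid_comp_def by (auto simp: nth_list_update)
next
  case (recv j p e b q w)
  then have "q < m_states (p_machs P ! j)" using wf unfolding wf_protocol_def by fastforce
  then show ?thesis using v recv unfolding valid_comp_def by (auto simp: nth_list_update)
qed

lemma consistent_iff:
  assumes wf: "wf_protocol P"
  shows "consistent P fam \<longleftrightarrow> \<not> (\<exists>S C S' C'. ce P fam S C S' C')"
proof
  assume "consistent P fam"
  then show "\<not> (\<exists>S C S' C'. ce P fam S C S' C')"
    unfolding consistent_def ce_def by (metis r_into_rtranclp)
next
  assume nce: "\<not> (\<exists>S C S' C'. ce P fam S C S' C')"
  have "valid_comp P (fst y) \<and> rel_mem P (fam_rel fam (fst y)) (snd y)"
    if "(step P)\<^sup>*\<^sup>* x y" "valid_comp P (fst x)" "rel_mem P (fam_rel fam (fst x)) (snd x)" for x y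
    using that
  proof (induction rule: rtranclp_induct)
    case base
    then show ?case by simp
  next
    case (step y z)
    then have vy: "valid_comp P (fst y)" "rel_mem P (fam_rel fam (fst y)) (snd y)" by auto
    have st: "step P (fst y, snd y) (fst z, snd z)" using step.hyps(2) by simp
    show ?case
      using step_valid_comp[OF wf st vy(1)] nce vy st unfolding ce_def by blast
  qed
  then show "consistent P fam" unfolding consistent_def by fastforce
qed




lemma run_nil_iff[simp]: "nfa_run T p [] q \<longleftrightarrow> p = q"
  by (auto elim: nfa_run.cases intro: nfa_run.intros)

lemma run_cons_iff[simp]: "nfa_run T p (a # w) q \<longleftrightarrow> (\<exists>r. (p, a, r) \<in> set T \<and> nfa_run T r w q)"
  by (auto elim: nfa_run.cases intro: nfa_run.intros)

lemma run_append: "nfa_run T p (u @ v) q \<longleftrightarrow> (\<exists>r. nfa_run T p u r \<and> nfa_run T r v q)"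
  by (induction u arbitrary: p) auto

definition weq :: "(nat \<times> nat \<times> nat) list set \<Rightarrow> nat \<Rightarrow> nat list \<Rightarrow> nat list \<Rightarrow> bool" where
  "weq Ts me w w' \<longleftrightarrow> (\<forall>T\<in>Ts. \<forall>p q. nfa_run T p w q = nfa_run T p w' q)
     \<and> ((\<forall>b\<in>set w. b < me) = (\<forall>b\<in>set w'. b < me))"

lemma weq_refl: "weq Ts me w w" by (simp add: weq_def)
lemma weq_sym: "weq Ts me w w' \<Longrightarrow> weq Ts me w' w" by (simp add: weq_def)
lemma weq_trans: "weq Ts me u v \<Longrightarrow> weq Ts me v w \<Longrightarrow> weq Ts me u w" by (simp add: weq_def)
lemma weq_append: "weq Ts me u u' \<Longrightarrow> weq Ts me (u @ z) (u' @ z)"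
  by (auto simp: weq_def run_append)
lemma weq_cons: "weq Ts me u u' \<Longrightarrow> weq Ts me (a # u) (a # u')"
  by (auto simp: weq_def)

definition bndT :: "(nat \<times> nat \<times> nat) list set \<Rightarrow> nat \<Rightarrow> bool" where
  "bndT Ts M \<longleftrightarrow> (\<forall>T\<in>Ts. \<forall>(p, a, q)\<in>set T. p \<le> M \<and> q \<le> M)"

lemma run_bnd:
  assumes "bndT Ts M" "T \<in> Ts" "nfa_run T p w q" "w \<noteq> []"
  shows "p \<le> M \<and> q \<le> M"
  using assms(3,4)
proof (induction w arbitrary: p)
  case Nil then show ?case by simp
next
  case (Cons a w)
  then obtain r where r: "(p, a, r) \<in> set T" "nfa_run T r w q" by auto
  then have "p \<le> M \<and> r \<le> M" using assms(1,2) unfolding bndT_def by fastforce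
  then show ?case using Cons.IH r by (cases w) auto
qed

definition prof :: "(nat \<times> nat \<times> nat) list set \<Rightarrow> nat \<Rightarrow> nat \<Rightarrow> nat list
    \<Rightarrow> ((nat \<times> nat \<times> nat) list \<times> nat \<times> nat) set \<times> bool \<times> bool" where
  "prof Ts M me w = ({(T, p, q). T \<in> Ts \<and> p \<le> M \<and> q \<le> M \<and> nfa_run T p w q}, w = [], \<forall>b\<in>set w. b < me)"

lemma prof_weq:
  assumes b: "bndT Ts M" and eq: "prof Ts M me u = prof Ts M me v"
  shows "weq Ts me u v"
proof -
  have e: "u = [] \<longleftrightarrow> v = []" and l: "(\<forall>b\<in>set u. b < me) = (\<forall>b\<in>set v. b < me)"
    and s: "{(T, p, q). T \<in> Ts \<and> p \<le> M \<and> q \<le> M \<and> nfa_run T p u q}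
          = {(T, p, q). T \<in> Ts \<and> p \<le> M \<and> q \<le> M \<and> nfa_run T p v q}"
    using eq unfolding prof_def by auto
  have "nfa_run T p u q = nfa_run T p v q" if T: "T \<in> Ts" for T p q
  proof (cases "u = []")
    case True then show ?thesis using e by simp
  next
    case False
    then have vne: "v \<noteq> []" using e by simp
    show ?thesis
    proof
      assume r: "nfa_run T p u q"
      then have "p \<le> M \<and> q \<le> M" using run_bnd[OF b T r False] by simp
      then show "nfa_run T p v q" using s r T by blast
    next
      assume r: "nfa_run T p v q"
      then have "p \<le> M \<and> q \<le> M" using run_bnd[OF b T r vne] by simp
      then show "nfa_run T p u q" using s r T by blast
    qed
  qed
  then show ?thesis using l unfolding weq_def by blast
qed

lemma short_word:
  assumes fin: "finite Ts" and K: "card Ts \<le> K" and b: "bndT Ts M"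
  shows "\<exists>w'. weq Ts me w w' \<and> length w' \<le> 4 * 2 ^ (K * (Suc M * Suc M))"
proof (induction "length w" arbitrary: w rule: less_induct)
  case less
  let ?N = "4 * 2 ^ (K * (Suc M * Suc M)) :: nat"
  show ?case
  proof (cases "length w \<le> ?N")
    case True then show ?thesis using weq_refl by blast
  next
    case False
    let ?B = "Pow (Ts \<times> {..M} \<times> {..M}) \<times> (UNIV :: bool set) \<times> (UNIV :: bool set)"
    let ?A = "{..length w}"
    let ?f = "\<lambda>i. prof Ts M me (take i w)"
    have finB: "finite ?B" using fin by simp
    have cardB: "card ?B = 2 ^ (card Ts * (Suc M * Suc M)) * 4"
    proof -
      have "card (UNIV :: (bool \<times> bool) set) = 4"
        by (simp add: UNIV_Times_UNIV[symmetric] card_cartesian_product del: UNIV_Times_UNIV)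
      then show ?thesis using fin by (simp add: card_cartesian_product card_Pow)
    qed
    have "card ?B \<le> ?N"
    proof -
      have "card Ts * (Suc M * Suc M) \<le> K * (Suc M * Suc M)" using K by (rule mult_le_mono1)
      then have "(2::nat) ^ (card Ts * (Suc M * Suc M)) \<le> 2 ^ (K * (Suc M * Suc M))"
        by (rule power_increasing) simp
      then show ?thesis unfolding cardB by simp
    qed
    then have lt: "card ?B < card ?A" using False by simp
    have sub: "?f ` ?A \<subseteq> ?B" unfolding prof_def by auto
    have "\<not> inj_on ?f ?A"
    proof
      assume "inj_on ?f ?A"
      then have "card ?A \<le> card ?B" using card_inj_on_le[OF _ sub finB] by blast
      then show False using lt by simp
    qed
    then obtain i j where ij: "i \<in> ?A" "j \<in> ?A" "i \<noteq> j" "?f i = ?f j"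
      unfolding inj_on_def by blast
    obtain i' j' where ij': "i' < j'" "j' \<le> length w" "?f i' = ?f j'"
      using ij by (cases "i < j") (auto, metis linorder_neqE_nat)
    define w1 where "w1 = take i' w @ drop j' w"
    have "weq Ts me (take j' w) (take i' w)"
      using prof_weq[OF b] ij'(3) by (metis weq_sym)
    then have "weq Ts me (take j' w @ drop j' w) w1"
      unfolding w1_def by (rule weq_append)
    then have w1: "weq Ts me w w1" by simp
    have "length w1 < length w" unfolding w1_def using ij' by auto
    then obtain w2 where "weq Ts me w1 w2" "length w2 \<le> ?N" using less by blast
    then show ?thesis using w1 weq_trans by blast
  qed
qed




definition famTs :: "family \<Rightarrow> (nat \<times> nat \<times> nat) list set" where
  "famTs fam = (\<lambda>a. snd (snd (snd a))) ` (\<Union>e\<in>set fam. \<Union>pr\<in>set (snd e). set pr)"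

lemma finite_famTs: "finite (famTs fam)"
  unfolding famTs_def by auto

lemma fam_rel_Ts: "pr \<in> set (fam_rel fam S) \<Longrightarrow> a \<in> set pr \<Longrightarrow> snd (snd (snd a)) \<in> famTs fam"
  unfolding fam_rel_def famTs_def
  by (cases "map_of fam S") (auto dest!: map_of_SomeD intro!: imageI, metis snd_conv)

lemma accepts_weq:
  assumes "weq Ts me w w'" "snd (snd (snd a)) \<in> Ts"
  shows "nfa_accepts a w = nfa_accepts a w'"
  using assms by (cases a) (auto simp: weq_def)

lemma relmem_weq:
  assumes len: "length C = length D"
    and w: "\<forall>d<length C. weq Ts (p_msgs P ! d) (C ! d) (D ! d)"
    and R: "\<forall>pr\<in>set R. \<forall>a\<in>set pr. snd (snd (snd a)) \<in> Ts"
  shows "rel_mem P R C = rel_mem P R D"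
proof -
  have vc: "valid_chan P C = valid_chan P D"
    unfolding valid_chan_def using len w by (auto simp: weq_def)
  have acc: "(\<forall>e<length (p_edges P). nfa_accepts (pr ! e) (C ! e)) =
             (\<forall>e<length (p_edges P). nfa_accepts (pr ! e) (D ! e))"
    if "pr \<in> set R" "length pr = length (p_edges P)" "length C = length (p_edges P)" for pr
    using that accepts_weq[of Ts _ "C ! _" "D ! _"] w R by (metis nth_mem)
  show ?thesis unfolding rel_mem_def
    using vc acc by (auto simp: valid_chan_def)
qed

lemma short_ce:
  assumes wf: "wf_protocol P" and c: "ce P fam S C S' C'"
    and K: "card (famTs fam) \<le> K" and b: "bndT (famTs fam) M"
  shows "\<exists>D D'. ce P fam S D S' D' \<and> (\<forall>w\<in>set D. length w \<le> Suc (4 * 2 ^ (K * (Suc M * Suc M))))"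
proof -
  let ?Ts = "famTs fam"
  let ?N = "4 * 2 ^ (K * (Suc M * Suc M)) :: nat"
  define sh where "sh me w = (SOME w'. weq ?Ts me w w' \<and> length w' \<le> ?N)" for me w
  have sh: "weq ?Ts me w (sh me w) \<and> length (sh me w) \<le> ?N" for me w
    unfolding sh_def by (rule someI_ex) (rule short_word[OF finite_famTs K b])
  have vS: "valid_comp P S" and rm: "rel_mem P (fam_rel fam S) C"
    and st: "step P (S, C) (S', C')" and nrm: "\<not> rel_mem P (fam_rel fam S') C'"
    using c unfolding ce_def by auto
  have lenC: "length C = length (p_edges P)" using rm unfolding rel_mem_def valid_chan_def by auto
  have RS: "\<forall>pr\<in>set (fam_rel fam X). \<forall>a\<in>set pr. snd (snd (snd a)) \<in> ?Ts" for X
    using fam_rel_Ts by blast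
  from st show ?thesis
  proof cases
    case (send j p e b q)
    have e: "e < length C"
      using wf send lenC unfolding wf_protocol_def by fastforce
    define D where "D = map (\<lambda>d. sh (p_msgs P ! d) (C ! d)) [0..<length C]"
    define D' where "D' = D[e := D ! e @ [b]]"
    have lenD: "length D = length C" unfolding D_def by simp
    have wD: "\<forall>d<length C. weq ?Ts (p_msgs P ! d) (C ! d) (D ! d)"
      unfolding D_def using sh by simp
    have wD': "\<forall>d<length C'. weq ?Ts (p_msgs P ! d) (C' ! d) (D' ! d)"
      using wD e lenD unfolding D'_def send by (auto simp: nth_list_update weq_append)
    have "rel_mem P (fam_rel fam S) D" using relmem_weq[OF lenD[symmetric] wD RS] rm by simp
    moreover have "\<not> rel_mem P (fam_rel fam S') D'"
      using relmem_weq[OF _ wD' RS] nrm lenD unfolding D'_def send by simp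
    moreover have "step P (S, D) (S', D')"
      unfolding D'_def send using send by (auto intro: step.send)
    moreover have "\<forall>w\<in>set D. length w \<le> Suc ?N"
      unfolding D_def using sh by (auto simp: le_SucI)
    ultimately show ?thesis using vS unfolding ce_def by blast
  next
    case (recv j p e b q w)
    have e: "e < length C"
      using wf recv lenC unfolding wf_protocol_def by fastforce
    define D where "D = map (\<lambda>d. if d = e then b # sh (p_msgs P ! e) w else sh (p_msgs P ! d) (C ! d)) [0..<length C]"
    define D' where "D' = D[e := sh (p_msgs P ! e) w]"
    have lenD: "length D = length C" unfolding D_def by simp
    have wD: "\<forall>d<length C. weq ?Ts (p_msgs P ! d) (C ! d) (D ! d)"
      unfolding D_def using sh recv by (auto simp: weq_cons)
    have wD': "\<forall>d<length C'. weq ?Ts (p_msgs P ! d) (C' ! d) (D' ! d)"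
      using wD e lenD sh unfolding D'_def recv by (auto simp: nth_list_update)
    have "rel_mem P (fam_rel fam S) D" using relmem_weq[OF lenD[symmetric] wD RS] rm by simp
    moreover have "\<not> rel_mem P (fam_rel fam S') D'"
      using relmem_weq[OF _ wD' RS] nrm lenD unfolding D'_def recv by simp
    moreover have "step P (S, D) (S', D')"
    proof -
      have "D ! e = b # sh (p_msgs P ! e) w" unfolding D_def using e by simp
      then show ?thesis unfolding D'_def recv using recv by (auto intro: step.recv)
    qed
    moreover have "\<forall>w\<in>set D. length w \<le> Suc ?N"
      unfolding D_def using sh by (auto simp: le_SucI)
    ultimately show ?thesis using vS unfolding ce_def by blast
  qed
qed




lemma enc_ntrans_inj[simp]: "enc_ntrans a = enc_ntrans b \<longleftrightarrow> a = b"
  by (cases a; cases b) auto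

lemma enc_ntrans_eq_pe: "enc_ntrans a = prod_encode (p, prod_encode (c, q)) \<longleftrightarrow> a = (p, c, q)"
  by (cases a) auto

lemma cnth_map_enc: "i < length xs \<Longrightarrow> cnth (list_encode (map f xs)) i = f (xs ! i)"
  by simp

definition vw :: "nat \<Rightarrow> nat \<Rightarrow> nat \<Rightarrow> nat \<Rightarrow> nat list" where
  "vw wc dr ap b = drop dr (list_decode wc) @ (if ap \<noteq> 0 then [b] else [])"

lemma wlen_vw: "ap \<le> 1 \<Longrightarrow> wlen wc dr ap = length (vw wc dr ap b)"
proof -
  assume "ap \<le> 1"
  moreover have "clen wc = length (list_decode wc)" by (metis clen_enc list_decode_inverse)
  ultimately show ?thesis by (auto simp: wlen_def vw_def)
qed

lemma wlet_vw: "k < length (vw wc dr ap b) \<Longrightarrow> wlet wc dr b k = vw wc dr ap b ! k"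
proof -
  assume k: "k < length (vw wc dr ap b)"
  have cl: "clen wc = length (list_decode wc)" by (metis clen_enc list_decode_inverse)
  have cn: "i < length (list_decode wc) \<Longrightarrow> cnth wc i = list_decode wc ! i" for i
    by (metis cnth_enc list_decode_inverse)
  show ?thesis using k by (auto simp: wlet_def vw_def cl cn nth_append add.commute split: if_splits)
qed

lemma run_seq:
  "nfa_run T p w q \<longleftrightarrow> (\<exists>sq. length sq = Suc (length w) \<and> sq ! 0 = p \<and> sq ! length w = q \<and>
      (\<forall>k<length w. (sq ! k, w ! k, sq ! Suc k) \<in> set T))"
proof (induction w arbitrary: p)
  case Nil
  then show ?case by (auto intro!: exI[of _ "[p]"])
next
  case (Cons a w)
  show ?case
  proof
    assume "nfa_run T p (a # w) q"
    then obtain r where r: "(p, a, r) \<in> set T" "nfa_run T r w q" by auto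
    then obtain sq where sq: "length sq = Suc (length w)" "sq ! 0 = r" "sq ! length w = q"
      "\<forall>k<length w. (sq ! k, w ! k, sq ! Suc k) \<in> set T" using Cons.IH by blast
    show "\<exists>sq. length sq = Suc (length (a # w)) \<and> sq ! 0 = p \<and> sq ! length (a # w) = q \<and>
      (\<forall>k<length (a # w). (sq ! k, (a # w) ! k, sq ! Suc k) \<in> set T)"
    proof (intro exI[of _ "p # sq"] conjI allI impI)
      fix k assume "k < length (a # w)"
      then show "((p # sq) ! k, (a # w) ! k, (p # sq) ! Suc k) \<in> set T"
        using sq r by (cases k) auto
    qed (use sq in auto)
  next
    assume "\<exists>sq. length sq = Suc (length (a # w)) \<and> sq ! 0 = p \<and> sq ! length (a # w) = q \<and>
      (\<forall>k<length (a # w). (sq ! k, (a # w) ! k, sq ! Suc k) \<in> set T)"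
    then obtain sq where sq: "length sq = Suc (Suc (length w))" "sq ! 0 = p" "sq ! Suc (length w) = q"
      "\<forall>k<Suc (length w). (sq ! k, (a # w) ! k, sq ! Suc k) \<in> set T" by auto
    have "nfa_run T (sq ! 1) w q"
      unfolding Cons.IH
      by (rule exI[of _ "tl sq"]) (use sq in \<open>auto simp: nth_tl\<close>)
    moreover have "(p, a, sq ! 1) \<in> set T" using sq(4)[rule_format, of 0] sq(2) by simp
    ultimately show "nfa_run T p (a # w) q" by auto
  qed
qed

lemma trans_le_NT:
  assumes "(p', a, q') \<in> set T"
  shows "q' \<le> list_encode (map enc_ntrans T)" "p' \<le> list_encode (map enc_ntrans T)"
proof -
  have "enc_ntrans (p', a, q') \<in> set (map enc_ntrans T)"
    using assms by (simp only: set_map) (rule imageI)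
  then have "enc_ntrans (p', a, q') \<le> list_encode (map enc_ntrans T)"
    by (rule elem_le_enc)
  moreover have "q' \<le> enc_ntrans (p', a, q')" "p' \<le> enc_ntrans (p', a, q')"
    using le_prod_encode_2[of q' a] le_prod_encode_2[of "prod_encode (a, q')" p'] le_prod_encode_1
    by (auto intro: le_trans)
  ultimately show "q' \<le> list_encode (map enc_ntrans T)" "p' \<le> list_encode (map enc_ntrans T)"
    by auto
qed

lemma run_c_correct:
  assumes NT: "NTc = list_encode (map enc_ntrans T)" and ap: "ap \<le> 1"
  shows "run_c NTc p q wc dr ap b \<longleftrightarrow> nfa_run T p (vw wc dr ap b) q"
proof -
  let ?w = "vw wc dr ap b"
  have L: "wlen wc dr ap = length ?w" using wlen_vw[OF ap] .
  have so: "step_ok NTc (list_encode sq) wc dr b k \<longleftrightarrow> (sq ! k, ?w ! k, sq ! Suc k) \<in> set T"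
    if "k < length ?w" "length sq = Suc (length ?w)" for sq k
  proof -
    have "step_ok NTc (list_encode sq) wc dr b k \<longleftrightarrow>
       (\<exists>t<length T. T ! t = (sq ! k, ?w ! k, sq ! Suc k))"
    proof -
      have "(\<exists>t<length T. cnth (list_encode (map enc_ntrans T)) t = X) \<longleftrightarrow>
            (\<exists>t<length T. enc_ntrans (T ! t) = X)" for X
        by (metis cnth_map_enc length_map nth_map)
      then show ?thesis
        unfolding step_ok_def stepb_def NT using that
        by (simp add: wlet_vw[OF that(1)] enc_ntrans_eq_pe)
    qed
    also have "\<dots> \<longleftrightarrow> (sq ! k, ?w ! k, sq ! Suc k) \<in> set T" by (metis in_set_conv_nth)
    finally show ?thesis .
  qed
  have "run_c NTc p q wc dr ap b \<longleftrightarrow>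
     (\<exists>sq. list_encode sq < Suc (Bnd (Suc (length ?w)) (p + NTc)) \<and>
        length sq = Suc (length ?w) \<and> sq ! 0 = p \<and> sq ! length ?w = q \<and>
        (\<forall>k<length ?w. (sq ! k, ?w ! k, sq ! Suc k) \<in> set T))"
  proof
    assume "run_c NTc p q wc dr ap b"
    then obtain sqc where sqc: "sqc < Suc (Bnd (Suc (length ?w)) (p + NTc))"
      "seq_ok sqc NTc p q wc dr ap b" unfolding run_c_def L by auto
    define sq where "sq = list_decode sqc"
    have e: "sqc = list_encode sq" unfolding sq_def by simp
    have len: "length sq = Suc (length ?w)" using sqc(2) unfolding seq_ok_def e L by simp
    show "\<exists>sq. list_encode sq < Suc (Bnd (Suc (length ?w)) (p + NTc)) \<and>
        length sq = Suc (length ?w) \<and> sq ! 0 = p \<and> sq ! length ?w = q \<and>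
        (\<forall>k<length ?w. (sq ! k, ?w ! k, sq ! Suc k) \<in> set T)"
      using sqc len so[OF _ len] unfolding seq_ok_def seqb_def e L by auto
  next
    assume "\<exists>sq. list_encode sq < Suc (Bnd (Suc (length ?w)) (p + NTc)) \<and>
        length sq = Suc (length ?w) \<and> sq ! 0 = p \<and> sq ! length ?w = q \<and>
        (\<forall>k<length ?w. (sq ! k, ?w ! k, sq ! Suc k) \<in> set T)"
    then obtain sq where sq: "list_encode sq < Suc (Bnd (Suc (length ?w)) (p + NTc))"
        "length sq = Suc (length ?w)" "sq ! 0 = p" "sq ! length ?w = q"
        "\<forall>k<length ?w. (sq ! k, ?w ! k, sq ! Suc k) \<in> set T" by blast
    show "run_c NTc p q wc dr ap b"
      unfolding run_c_def L
      by (rule exI[of _ "list_encode sq"]) (use sq so[OF _ sq(2)] in \<open>auto simp: seq_ok_def seqb_def L\<close>)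
  qed
  also have "\<dots> \<longleftrightarrow> nfa_run T p ?w q"
  proof -
    have "list_encode sq \<le> Bnd (Suc (length ?w)) (p + NTc)"
      if "length sq = Suc (length ?w)" "sq ! 0 = p"
        "\<forall>k<length ?w. (sq ! k, ?w ! k, sq ! Suc k) \<in> set T" for sq
    proof (rule enc_le_Bnd)
      show "length sq \<le> Suc (length ?w)" using that by simp
      show "\<forall>x\<in>set sq. x \<le> p + NTc"
      proof
        fix y assume "y \<in> set sq"
        then obtain i where i: "i < length sq" "sq ! i = y" by (auto simp: in_set_conv_nth)
        show "y \<le> p + NTc"
        proof (cases i)
          case 0 then show ?thesis using i that by simp
        next
          case (Suc k)
          then have "(sq ! k, ?w ! k, sq ! Suc k) \<in> set T" using that i by auto
          then have "sq ! Suc k \<le> NTc" using trans_le_NT(1) NT by blast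
          then show ?thesis using i Suc by simp
        qed
      qed
    qed
    then show ?thesis unfolding run_seq by (auto simp: less_Suc_eq_le)
  qed
  finally show ?thesis .
qed




lemma acc_c_correct:
  assumes "ac = enc_nfa a" "ap \<le> 1"
  shows "acc_c ac wc dr ap b \<longleftrightarrow> nfa_accepts a (vw wc dr ap b)"
proof -
  obtain k I Fi T where a: "a = (k, I, Fi, T)" by (cases a) auto
  have "acc_c ac wc dr ap b \<longleftrightarrow> (\<exists>ip<length I. \<exists>iq<length Fi. nfa_run T (I ! ip) (vw wc dr ap b) (Fi ! iq))"
    unfolding acc_c_def accb1_def accb2_def assms(1) a
    by (simp add: run_c_correct[OF refl assms(2)] cong: conj_cong)
  also have "\<dots> \<longleftrightarrow> nfa_accepts a (vw wc dr ap b)"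
    unfolding a by (fastforce simp: in_set_conv_nth)
  finally show ?thesis .
qed

lemma enc_input_unfold:
  "enc_input ((n, es, ms, F), fam) = prod_encode (prod_encode (n, prod_encode (list_encode (map prod_encode es),
      prod_encode (list_encode ms, list_encode (map enc_machine F)))), enc_family fam)"
  by simp

lemma dec_basic:
  assumes x: "x = enc_input ((n, es, ms, F), fam)"
  shows "nN x = n" "ne x = length es" "d < length ms \<Longrightarrow> msg x d = ms ! d"
    "Fcx x = list_encode (map enc_entry fam)"
  using x by (simp_all add: nN_def ne_def msg_def Fcx_def enc_family_def)

lemma dec_mach:
  assumes x: "x = enc_input ((n, es, ms, F), fam)" and j: "j < length F"
  shows "mst x j = m_states (F ! j)" "Tcx x j = list_encode (map enc_trans (m_trans (F ! j)))"
proof -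
  obtain k h T where "F ! j = (k, h, T)" by (cases "F ! j") auto
  then show "mst x j = m_states (F ! j)" "Tcx x j = list_encode (map enc_trans (m_trans (F ! j)))"
    using x j by (simp_all add: mst_def Tcx_def)
qed

lemma dec_trans:
  assumes x: "x = enc_input ((n, es, ms, F), fam)" and j: "j < length F"
    and t: "t < length (m_trans (F ! j))" and tr: "m_trans (F ! j) ! t = (p, (s, e, b), q)"
  shows "tp x j t = p" "tq x j t = q" "ts x j t = of_bool s" "te x j t = e" "tb x j t = b"
proof -
  have "trc x j t = enc_trans (p, (s, e, b), q)"
    unfolding trc_def dec_mach[OF x j] using t tr by simp
  then show "tp x j t = p" "tq x j t = q" "ts x j t = of_bool s" "te x j t = e" "tb x j t = b"
    by (simp_all add: tp_def tq_def ts_def te_def tb_def)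
qed

lemma drd_le: "v \<le> 1 \<Longrightarrow> drd d e v \<le> 1" by (simp add: drd_def)

lemma relmem_c_correct:
  assumes x: "x = enc_input (P, fam)" and P: "P = (n, es, ms, F)" and wf: "wf_protocol P"
    and Rc: "Rc = enc_recrel R" and cc: "cc = list_encode (map list_encode C)" and ap: "ap \<le> 1"
  shows "relmem_c x Rc cc e dr ap b \<longleftrightarrow>
    rel_mem P R (map (\<lambda>d. vw (list_encode (C ! d)) (drd d e dr) (drd d e ap) b) [0..<length C])"
proof -
  let ?C2 = "map (\<lambda>d. vw (list_encode (C ! d)) (drd d e dr) (drd d e ap) b) [0..<length C]"
  have lms: "length ms = length es" using wf P unfolding wf_protocol_def by simp
  have x': "x = enc_input ((n, es, ms, F), fam)" using x P by simp
  have ap': "drd d e ap \<le> 1" for d using drd_le[OF ap] .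
  have vc: "vcb1 d x Rc cc e dr ap b \<longleftrightarrow> (\<forall>c\<in>set (?C2 ! d). c < ms ! d)"
    if d: "d < length C" "d < length es" for d
  proof -
    have "vcb1 d x Rc cc e dr ap b \<longleftrightarrow> (\<forall>k<length (?C2 ! d). ?C2 ! d ! k < ms ! d)"
      unfolding vcb1_def vcb2_def cc using d
      by (simp add: wlen_vw[OF ap', where b=b] wlet_vw dec_basic(3)[OF x'] lms)
    then show ?thesis by (simp add: all_set_conv_all_nth)
  qed
  have pr: "prb1 i x Rc cc e dr ap b \<longleftrightarrow> length (R ! i) = length es \<and>
      (\<forall>d<length es. nfa_accepts (R ! i ! d) (?C2 ! d))"
    if i: "i < length R" and l: "length C = length es" for i
    unfolding prb1_def prb2_def Rc cc enc_recrel_def using i l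
    by (auto simp: dec_basic[OF x'] acc_c_correct[OF refl ap'])
  have A: "relmem_c x Rc cc e dr ap b \<longleftrightarrow> length C = length es \<and>
      (\<forall>d<length es. vcb1 d x Rc cc e dr ap b) \<and> (\<exists>i<length R. prb1 i x Rc cc e dr ap b)"
    unfolding relmem_c_def by (simp add: cc Rc dec_basic[OF x'] enc_recrel_def)
  have ex: "(\<exists>pr\<in>set R. Q pr) \<longleftrightarrow> (\<exists>i<length R. Q (R ! i))" for Q
    by (metis in_set_conv_nth)
  have B: "rel_mem P R ?C2 \<longleftrightarrow> length C = length es \<and>
      (\<forall>d<length es. \<forall>c\<in>set (?C2 ! d). c < ms ! d) \<and>
      (\<exists>i<length R. length (R ! i) = length es \<and> (\<forall>d<length es. nfa_accepts (R ! i ! d) (?C2 ! d)))"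
    unfolding rel_mem_def valid_chan_def ex by (simp add: P)
  show ?thesis
    unfolding A B using vc pr by auto
qed




lemma sum_first:
  "(\<Sum>i<L. of_bool (\<forall>i'<Suc i. \<not> m i') :: nat) = (if \<exists>i<L. m i then (LEAST i. m i) else L)"
proof (induction L)
  case 0 then show ?case by simp
next
  case (Suc L)
  show ?case
  proof (cases "\<exists>i<L. m i")
    case True
    then have "\<not> (\<forall>i'<Suc L. \<not> m i')" using less_SucI by blast
    then show ?thesis using Suc True by auto
  next
    case False
    show ?thesis
    proof (cases "m L")
      case True
      have "(LEAST i. m i) = L"
        by (rule Least_equality) (use True False in \<open>auto simp: not_less[symmetric]\<close>)
      then show ?thesis using Suc False True by auto
    next
      case f2: False
      have "\<not> (\<exists>i<Suc L. m i)" using False f2 less_Suc_eq by auto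
      moreover have "\<forall>i'<Suc L. \<not> m i'" using False f2 less_Suc_eq by auto
      ultimately show ?thesis using Suc.IH False by auto
    qed
  qed
qed

lemma map_of_least:
  "map_of xs k = (if \<exists>i<length xs. fst (xs ! i) = k then Some (snd (xs ! (LEAST i. fst (xs ! i) = k))) else None)"
proof (induction xs)
  case Nil then show ?case by simp
next
  case (Cons a xs)
  show ?case
  proof (cases "fst a = k")
    case True
    then have "(LEAST i. fst ((a # xs) ! i) = k) = 0" by (intro Least_equality) auto
    then show ?thesis using True by (cases a) auto
  next
    case False
    have ex: "(\<exists>i<length (a # xs). fst ((a # xs) ! i) = k) \<longleftrightarrow> (\<exists>i<length xs. fst (xs ! i) = k)"
      using False by (auto simp: less_Suc_eq_0_disj)
    have "(LEAST i. fst ((a # xs) ! i) = k) = Suc (LEAST i. fst (xs ! i) = k)"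
      if "\<exists>i<length xs. fst (xs ! i) = k"
    proof -
      from that obtain i where "fst (xs ! i) = k" by auto
      then have "fst ((a # xs) ! Suc i) = k" by simp
      then show ?thesis by (subst Least_Suc[of _ "Suc i"]) (use False in auto)
    qed
    then show ?thesis using Cons False ex by (cases a) auto
  qed
qed

lemma lookup_correct:
  assumes x: "x = enc_input ((n, es, ms, F), fam)" and sc: "sc = list_encode Ss" and l: "length Ss = n"
  shows "lookup x sc j q = enc_recrel (fam_rel fam (Ss[j := q]))"
proof -
  let ?S' = "Ss[j := q]"
  let ?m = "\<lambda>i. fst (fam ! i) = ?S'"
  have km: "keym i x sc j q \<longleftrightarrow> ?m i" if i: "i < length fam" for i
  proof -
    have c: "cfst (cnth (Fcx x) i) = list_encode (fst (fam ! i))"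
      using i by (cases "fam ! i") (simp add: dec_basic(4)[OF x])
    have "keym i x sc j q \<longleftrightarrow> length (fst (fam ! i)) = n \<and>
        (\<forall>i'<n. fst (fam ! i) ! i' = (if i' = j then q else Ss ! i'))"
      unfolding keym_def keyb2_def c dec_basic(1)[OF x] sc using l by (auto cong: conj_cong)
    also have "\<dots> \<longleftrightarrow> ?m i"
    proof
      assume H: "length (fst (fam ! i)) = n \<and> (\<forall>i'<n. fst (fam ! i) ! i' = (if i' = j then q else Ss ! i'))"
      show "?m i"
      proof (rule nth_equalityI)
        show "length (fst (fam ! i)) = length ?S'" using H l by simp
        fix ia assume "ia < length (fst (fam ! i))"
        then show "fst (fam ! i) ! ia = ?S' ! ia" using H l by (auto simp: nth_list_update)
      qed
    next
      assume "?m i"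
      then show "length (fst (fam ! i)) = n \<and> (\<forall>i'<n. fst (fam ! i) ! i' = (if i' = j then q else Ss ! i'))"
        using l by (auto simp: nth_list_update)
    qed
    finally show ?thesis .
  qed
  have idx: "lk_idx x sc j q = (if \<exists>i<length fam. ?m i then (LEAST i. ?m i) else length fam)"
  proof -
    have "lk_idx x sc j q = (\<Sum>i<length fam. of_bool (\<forall>i'<Suc i. \<not> ?m i') :: nat)"
      unfolding lk_idx_def lkb_def nkb_def dec_basic(4)[OF x] clen_enc length_map
      by (intro sum.cong refl) (use km in \<open>auto\<close>)
    then show ?thesis by (simp add: sum_first)
  qed
  show ?thesis
  proof (cases "\<exists>i<length fam. ?m i")
    case True
    then obtain i where "i < length fam" "?m i" by auto
    then have lt: "(LEAST i. ?m i) < length fam" by (meson LeastI le_less_trans Least_le)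
    have "cnth (Fcx x) (LEAST i. ?m i) = enc_entry (fam ! (LEAST i. ?m i))"
      using lt by (simp add: dec_basic(4)[OF x])
    then show ?thesis
      unfolding lookup_def idx fam_rel_def map_of_least using True lt
      by (cases "fam ! (LEAST i. ?m i)") (simp add: dec_basic(4)[OF x])
  next
    case False
    then show ?thesis
      unfolding lookup_def idx fam_rel_def map_of_least if_not_P[OF False]
      by (simp add: enc_recrel_def dec_basic(4)[OF x])
  qed
qed




lemma vw_enc: "vw (list_encode w) 0 0 b = w" by (simp add: vw_def)
lemma drd_0[simp]: "drd d e 0 = 0" by (simp add: drd_def)

lemma views_00: "map (\<lambda>d. vw (list_encode (Cs ! d)) (drd d e 0) (drd d e 0) b) [0..<length Cs] = Cs"
  by (rule nth_equalityI) (auto simp: vw_enc)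

lemma views_01: "e < length Cs \<Longrightarrow>
   map (\<lambda>d. vw (list_encode (Cs ! d)) (drd d e 0) (drd d e 1) b) [0..<length Cs] = Cs[e := Cs ! e @ [b]]"
  by (rule nth_equalityI) (auto simp: vw_def drd_def nth_list_update)

lemma views_10: "e < length Cs \<Longrightarrow> Cs ! e = b # w \<Longrightarrow>
   map (\<lambda>d. vw (list_encode (Cs ! d)) (drd d e 1) (drd d e 0) b) [0..<length Cs] = Cs[e := w]"
  by (rule nth_equalityI) (auto simp: vw_def drd_def nth_list_update)

lemma CEc_iff:
  assumes x: "x = enc_input (P, fam)" and P: "P = (n, es, ms, F)" and wf: "wf_protocol P"
    and sc: "sc = list_encode Ss" and cc: "cc = list_encode (map list_encode Cs)"
    and j: "j < n" and t: "t < length (m_trans (F ! j))" and tr: "m_trans (F ! j) ! t = (p, (s, e, b), q)"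
  shows "CEc x sc cc j t \<longleftrightarrow> valid_comp P Ss \<and> rel_mem P (fam_rel fam Ss) Cs \<and> Ss ! j = p \<and>
     (if s then \<not> rel_mem P (fam_rel fam (Ss[j := q])) (Cs[e := Cs ! e @ [b]])
      else (\<exists>w. Cs ! e = b # w \<and> \<not> rel_mem P (fam_rel fam (Ss[j := q])) (Cs[e := w])))"
proof -
  have x': "x = enc_input ((n, es, ms, F), fam)" using x P by simp
  have lenF: "length F = n" using wf P unfolding wf_protocol_def by simp
  have jF: "j < length F" using j lenF by simp
  note dt = dec_trans[OF x' jF t tr]
  have eE: "e < length es"
  proof -
    have "(p, (s, e, b), q) \<in> set (m_trans (p_machs P ! j))" using t tr P by (metis nth_mem p_machs.simps)
    then show ?thesis using wf j P unfolding wf_protocol_def by fastforce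
  qed
  have vc: "(clen sc = nN x \<and> (\<forall>i<nN x. vsb i x sc)) \<longleftrightarrow> valid_comp P Ss"
    unfolding valid_comp_def vsb_def sc dec_basic(1)[OF x'] P
    using lenF dec_mach(1)[OF x'] by (auto cong: conj_cong)
  have rm: "relmem_c x (lookup x sc j q') cc e' dr ap b' \<longleftrightarrow>
     rel_mem P (fam_rel fam (Ss[j := q'])) (map (\<lambda>d. vw (list_encode (Cs ! d)) (drd d e' dr) (drd d e' ap) b') [0..<length Cs])"
    if "length Ss = n" "ap \<le> 1" for q' e' dr ap b'
    using relmem_c_correct[OF x P wf _ cc that(2)] lookup_correct[OF x' sc that(1)] by simp
  show ?thesis
  proof (cases "valid_comp P Ss")
    case False
    then show ?thesis unfolding CEc_def using vc by auto
  next
    case True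
    then have lS: "length Ss = n" using P unfolding valid_comp_def by simp
    have rm1: "relmem_c x (lookup x sc j (cnth sc j)) cc e 0 0 b \<longleftrightarrow> rel_mem P (fam_rel fam Ss) Cs"
      using rm[OF lS, where q'="cnth sc j" and e'=e and dr=0 and ap=0 and b'=b] views_00[of Cs e b] j lS by (simp add: sc)
    show ?thesis
    proof (cases "rel_mem P (fam_rel fam Ss) Cs")
      case False
      then show ?thesis unfolding CEc_def dt using rm1 by auto
    next
      case rC: True
      then have eC: "e < length Cs" using eE P unfolding rel_mem_def valid_chan_def by simp
      have pre: "j < nN x \<and> t < clen (Tcx x j) \<and> clen sc = nN x \<and> (\<forall>i<nN x. vsb i x sc)"
        using vc True j t by (simp add: dec_basic(1)[OF x'] dec_mach(2)[OF x' jF])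
      have tpj: "(tp x j t = cnth sc j) \<longleftrightarrow> Ss ! j = p" using dt j lS sc by auto
      show ?thesis
      proof (cases s)
        case True
        have "relmem_c x (lookup x sc j q) cc e 0 1 b \<longleftrightarrow> rel_mem P (fam_rel fam (Ss[j := q])) (Cs[e := Cs ! e @ [b]])"
          using rm[OF lS, where q'=q and e'=e and dr=0 and ap=1 and b'=b] views_01[OF eC, of b] by simp
        then show ?thesis unfolding CEc_def using pre tpj rm1 rC True \<open>valid_comp P Ss\<close> dt by auto
      next
        case False
        have ex: "(clen (cnth cc e) \<noteq> 0 \<and> cnth (cnth cc e) 0 = b) \<longleftrightarrow> (\<exists>w. Cs ! e = b # w)"
        proof -
          have ce: "cnth cc e = list_encode (Cs ! e)" using eC by (simp add: cc)
          have "(clen (list_encode w) \<noteq> 0 \<and> cnth (list_encode w) 0 = b) \<longleftrightarrow> (\<exists>w'. w = b # w')" for w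
            by (cases w) (simp_all del: list_encode.simps)
          then show ?thesis unfolding ce .
        qed
        have r3: "relmem_c x (lookup x sc j q) cc e 1 0 b \<longleftrightarrow> rel_mem P (fam_rel fam (Ss[j := q])) (Cs[e := w])"
          if "Cs ! e = b # w" for w
          using rm[OF lS, where q'=q and e'=e and dr=1 and ap=0 and b'=b] views_10[OF eC that] by simp
        show ?thesis unfolding CEc_def using pre tpj rm1 rC False \<open>valid_comp P Ss\<close> dt ex r3
          by auto
      qed
    qed
  qed
qed




lemma step_iff:
  assumes P: "P = (n, es, ms, F)"
  shows "step P (Ss, Cs) (S', C') \<longleftrightarrow> (\<exists>j<n. \<exists>t<length (m_trans (F ! j)). \<exists>p s e b q.
     m_trans (F ! j) ! t = (p, (s, e, b), q) \<and> Ss ! j = p \<and> S' = Ss[j := q] \<and>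
     (if s then C' = Cs[e := Cs ! e @ [b]] else (\<exists>w. Cs ! e = b # w \<and> C' = Cs[e := w])))"
proof
  assume "step P (Ss, Cs) (S', C')"
  then show "\<exists>j<n. \<exists>t<length (m_trans (F ! j)). \<exists>p s e b q.
     m_trans (F ! j) ! t = (p, (s, e, b), q) \<and> Ss ! j = p \<and> S' = Ss[j := q] \<and>
     (if s then C' = Cs[e := Cs ! e @ [b]] else (\<exists>w. Cs ! e = b # w \<and> C' = Cs[e := w]))"
  proof cases
    case (send j p e b q)
    then obtain t where "t < length (m_trans (F ! j))" "m_trans (F ! j) ! t = (p, (True, e, b), q)"
      using P by (metis in_set_conv_nth p_machs.simps)
    moreover have "j < n" using send P by simp
    moreover have "m_trans (F ! j) ! t = (p, (True, e, b), q) \<and> Ss ! j = p \<and> S' = Ss[j := q] \<and>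
       (if True then C' = Cs[e := Cs ! e @ [b]] else (\<exists>w. Cs ! e = b # w \<and> C' = Cs[e := w]))"
      using send calculation by simp
    ultimately show ?thesis by blast
  next
    case (recv j p e b q w)
    then obtain t where "t < length (m_trans (F ! j))" "m_trans (F ! j) ! t = (p, (False, e, b), q)"
      using P by (metis in_set_conv_nth p_machs.simps)
    moreover have "j < n" using recv P by simp
    moreover have "m_trans (F ! j) ! t = (p, (False, e, b), q) \<and> Ss ! j = p \<and> S' = Ss[j := q] \<and>
       (if False then C' = Cs[e := Cs ! e @ [b]] else (\<exists>w. Cs ! e = b # w \<and> C' = Cs[e := w]))"
      using recv calculation by simp
    ultimately show ?thesis by blast
  qed
next
  assume "\<exists>j<n. \<exists>t<length (m_trans (F ! j)). \<exists>p s e b q.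
     m_trans (F ! j) ! t = (p, (s, e, b), q) \<and> Ss ! j = p \<and> S' = Ss[j := q] \<and>
     (if s then C' = Cs[e := Cs ! e @ [b]] else (\<exists>w. Cs ! e = b # w \<and> C' = Cs[e := w]))"
  then obtain j t p s e b q where H: "j < n" "t < length (m_trans (F ! j))"
     "m_trans (F ! j) ! t = (p, (s, e, b), q)" "Ss ! j = p" "S' = Ss[j := q]"
     "(if s then C' = Cs[e := Cs ! e @ [b]] else (\<exists>w. Cs ! e = b # w \<and> C' = Cs[e := w]))" by blast
  have m: "(p, (s, e, b), q) \<in> set (m_trans (p_machs P ! j))" using H P by (metis nth_mem p_machs.simps)
  have j: "j < p_nodes P" using H P by simp
  show "step P (Ss, Cs) (S', C')"
  proof (cases s)
    case True
    then show ?thesis using H m j step.send[OF j, of p e b q Ss Cs] by simp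
  next
    case False
    then obtain w where "Cs ! e = b # w" "C' = Cs[e := w]" using H by auto
    then show ?thesis using H m j False step.recv[OF j, of p e b q Ss Cs w] by simp
  qed
qed

lemma ce_iff_CEc:
  assumes x: "x = enc_input (P, fam)" and P: "P = (n, es, ms, F)" and wf: "wf_protocol P"
    and sc: "sc = list_encode Ss" and cc: "cc = list_encode (map list_encode Cs)"
  shows "(\<exists>S' C'. ce P fam Ss Cs S' C') \<longleftrightarrow> (\<exists>j<n. \<exists>t<length (m_trans (F ! j)). CEc x sc cc j t)"
proof
  assume "\<exists>S' C'. ce P fam Ss Cs S' C'"
  then obtain S' C' where c: "ce P fam Ss Cs S' C'" by blast
  then have st: "step P (Ss, Cs) (S', C')" unfolding ce_def by simp
  then obtain j t p s e b q where H: "j < n" "t < length (m_trans (F ! j))"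
     "m_trans (F ! j) ! t = (p, (s, e, b), q)" "Ss ! j = p" "S' = Ss[j := q]"
     "(if s then C' = Cs[e := Cs ! e @ [b]] else (\<exists>w. Cs ! e = b # w \<and> C' = Cs[e := w]))"
    unfolding step_iff[OF P] by blast
  have "CEc x sc cc j t"
    unfolding CEc_iff[OF x P wf sc cc H(1-3)] using c H unfolding ce_def by (auto split: if_splits)
  then show "\<exists>j<n. \<exists>t<length (m_trans (F ! j)). CEc x sc cc j t" using H by blast
next
  assume "\<exists>j<n. \<exists>t<length (m_trans (F ! j)). CEc x sc cc j t"
  then obtain j t where jt: "j < n" "t < length (m_trans (F ! j))" "CEc x sc cc j t" by blast
  obtain p s e b q where tr: "m_trans (F ! j) ! t = (p, (s, e, b), q)"
  proof -
    define tr where "tr = m_trans (F ! j) ! t"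
    have "tr = (fst tr, (fst (fst (snd tr)), fst (snd (fst (snd tr))), snd (snd (fst (snd tr)))), snd (snd tr))"
      by simp
    then show ?thesis using that unfolding tr_def by blast
  qed
  note H = jt(3)[unfolded CEc_iff[OF x P wf sc cc jt(1,2) tr]]
  show "\<exists>S' C'. ce P fam Ss Cs S' C'"
  proof (cases s)
    case True
    have "step P (Ss, Cs) (Ss[j := q], Cs[e := Cs ! e @ [b]])"
    proof -
      have "m_trans (F ! j) ! t = (p, (True, e, b), q) \<and> Ss ! j = p \<and> Ss[j := q] = Ss[j := q] \<and>
       (if True then Cs[e := Cs ! e @ [b]] = Cs[e := Cs ! e @ [b]] else (\<exists>w'. Cs ! e = b # w' \<and> Cs[e := Cs ! e @ [b]] = Cs[e := w']))"
        using tr H True by simp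
      then show ?thesis unfolding step_iff[OF P] using jt True by blast
    qed
    then show ?thesis using H True unfolding ce_def by auto
  next
    case False
    then obtain w where w: "Cs ! e = b # w" "\<not> rel_mem P (fam_rel fam (Ss[j := q])) (Cs[e := w])"
      using H by auto
    have "step P (Ss, Cs) (Ss[j := q], Cs[e := w])"
    proof -
      have "m_trans (F ! j) ! t = (p, (False, e, b), q) \<and> Ss ! j = p \<and> Ss[j := q] = Ss[j := q] \<and>
       (if False then Cs[e := w] = Cs[e := Cs ! e @ [b]] else (\<exists>w'. Cs ! e = b # w' \<and> Cs[e := w] = Cs[e := w']))"
        using tr H w False by simp
      then show ?thesis unfolding step_iff[OF P] using jt False by blast
    qed
    then show ?thesis using H w unfolding ce_def by auto
  qed
qed




lemma le_pe1: "a \<le> c \<Longrightarrow> a \<le> prod_encode (c, d)"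
  using le_prod_encode_1[of c d] by linarith
lemma le_pe2: "a \<le> d \<Longrightarrow> a \<le> prod_encode (c, d)"
  using le_prod_encode_2[of d c] by linarith
lemma le_enc_elem: "a \<le> y \<Longrightarrow> y \<in> set ys \<Longrightarrow> a \<le> list_encode ys"
  using elem_le_enc[of y ys] by linarith

lemma bounds:
  assumes x: "x = enc_input ((n, es, ms, F), fam)"
  shows "n \<le> x" "length es \<le> x" "d < length ms \<Longrightarrow> ms ! d \<le> x"
    "j < length F \<Longrightarrow> m_states (F ! j) \<le> x"
proof -
  have p: "enc_protocol (n, es, ms, F) \<le> x" using x by (simp add: le_pe1)
  show "n \<le> x" using le_trans[OF le_prod_encode_1 p[simplified]] .
  have "length es \<le> list_encode (map prod_encode es)" using length_le_enc[of "map prod_encode es"] by simp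
  then show "length es \<le> x" using p by (simp del: enc_input.simps) (blast intro: le_trans le_pe1 le_pe2)
  show "ms ! d \<le> x" if "d < length ms"
  proof -
    have "ms ! d \<le> list_encode ms" using that by (rule nth_le_enc)
    then show ?thesis using p by (simp del: enc_input.simps) (blast intro: le_trans le_pe1 le_pe2)
  qed
  show "m_states (F ! j) \<le> x" if j: "j < length F"
  proof -
    have "m_states (F ! j) \<le> enc_machine (F ! j)" by (cases "F ! j") (simp add: le_pe1)
    moreover have "enc_machine (F ! j) \<in> set (map enc_machine F)" using j by simp
    ultimately have "m_states (F ! j) \<le> list_encode (map enc_machine F)" by (rule le_enc_elem)
    then show ?thesis using p by (simp del: enc_input.simps) (blast intro: le_trans le_pe1 le_pe2)
  qed
qed

lemma famTs_le:
  assumes x: "x = enc_input (P, fam)" and T: "T \<in> famTs fam"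
  shows "list_encode (map enc_ntrans T) \<le> x"
proof -
  obtain a pr ent where a: "T = snd (snd (snd a))" "a \<in> set pr" "pr \<in> set (snd ent)" "ent \<in> set fam"
    using T unfolding famTs_def by auto
  have "list_encode (map enc_ntrans T) \<le> enc_nfa a" using a(1) by (cases a) (simp add: le_pe2)
  then have "list_encode (map enc_ntrans T) \<le> list_encode (map enc_nfa pr)"
    using a(2) by (auto intro: le_enc_elem)
  then have "list_encode (map enc_ntrans T) \<le> enc_recrel (snd ent)"
    unfolding enc_recrel_def using a(3) by (auto intro: le_enc_elem)
  then have "list_encode (map enc_ntrans T) \<le> enc_entry ent"
    by (cases ent) (simp add: le_pe2)
  then have "list_encode (map enc_ntrans T) \<le> enc_family fam"
    unfolding enc_family_def using a(4) by (auto intro: le_enc_elem)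
  then show ?thesis using x by (cases P) (simp add: le_pe2)
qed

lemma famTs_bndT:
  assumes x: "x = enc_input (P, fam)"
  shows "bndT (famTs fam) x"
  unfolding bndT_def
proof (intro ballI, clarify)
  fix T p a q assume T: "T \<in> famTs fam" and m: "(p, a, q) \<in> set T"
  show "p \<le> x \<and> q \<le> x" using trans_le_NT[OF m] famTs_le[OF x T] by auto
qed

lemma famTs_card:
  assumes x: "x = enc_input (P, fam)"
  shows "card (famTs fam) \<le> Suc x"
proof -
  let ?g = "\<lambda>T. list_encode (map enc_ntrans T)"
  have inj: "inj_on ?g (famTs fam)"
  proof (rule inj_onI)
    fix T1 T2 assume "?g T1 = ?g T2"
    then have "map enc_ntrans T1 = map enc_ntrans T2" by (simp add: list_encode_eq)
    moreover have "inj enc_ntrans" by (rule injI) simp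
    ultimately show "T1 = T2" by (simp add: inj_map_eq_map)
  qed
  have "?g ` famTs fam \<subseteq> {..x}" using famTs_le[OF x] by auto
  then have "card (famTs fam) \<le> card {..x}" using card_inj_on_le[OF inj] by blast
  then show ?thesis by simp
qed

lemma d0_iff:
  assumes x: "x = enc_input (P, fam)" and P: "P = (n, es, ms, F)" and wf: "wf_protocol P"
  shows "d0 x \<longleftrightarrow> (\<exists>Ss Cs S' C'. ce P fam Ss Cs S' C')"
proof -
  have x': "x = enc_input ((n, es, ms, F), fam)" using x P by simp
  have lenF: "length F = n" using wf P unfolding wf_protocol_def by simp
  have lms: "length ms = length es" using wf P unfolding wf_protocol_def by simp
  have d0: "d0 x \<longleftrightarrow> (\<exists>sc<Suc (Bnd x x). \<exists>cc<Suc (Bnd x (Bnd (NW x) x)).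
      \<exists>j<n. \<exists>t<length (m_trans (F ! j)). CEc x sc cc j t)"
  proof -
    have "(\<exists>j<nN x. \<exists>t<clen (Tcx x j). CEc x sc cc j t) \<longleftrightarrow> (\<exists>j<n. \<exists>t<length (m_trans (F ! j)). CEc x sc cc j t)"
      for sc cc
    proof -
      have eqc: "j < n \<Longrightarrow> clen (Tcx x j) = length (m_trans (F ! j))" for j
        using dec_mach(2)[OF x'] lenF by simp
      show ?thesis by (simp add: dec_basic(1)[OF x'] eqc cong: conj_cong)
    qed
    then show ?thesis unfolding d0_def d1_def d2_def d3_def d4_def by simp
  qed
  show ?thesis
  proof
    assume "d0 x"
    then obtain sc cc j t where H: "j < n" "t < length (m_trans (F ! j))" "CEc x sc cc j t"
      unfolding d0 by blast
    define Ss where "Ss = list_decode sc"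
    define Cs where "Cs = map list_decode (list_decode cc)"
    have sc: "sc = list_encode Ss" unfolding Ss_def by simp
    have cc: "cc = list_encode (map list_encode Cs)" unfolding Cs_def by (simp add: map_idI)
    show "\<exists>Ss Cs S' C'. ce P fam Ss Cs S' C'"
      using ce_iff_CEc[OF x P wf sc cc] H by blast
  next
    assume "\<exists>Ss Cs S' C'. ce P fam Ss Cs S' C'"
    then obtain Ss Cs S' C' where c: "ce P fam Ss Cs S' C'" by blast
    obtain D D' where cD: "ce P fam Ss D S' D'"
      and lD: "\<forall>w\<in>set D. length w \<le> Suc (4 * 2 ^ (Suc x * (Suc x * Suc x)))"
      using short_ce[OF wf c famTs_card[OF x] famTs_bndT[OF x]] by blast
    have vS: "valid_comp P Ss" and rD: "rel_mem P (fam_rel fam Ss) D" using cD unfolding ce_def by auto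
    have b1: "list_encode Ss < Suc (Bnd x x)"
    proof -
      have "length Ss \<le> x" using vS P bounds(1)[OF x'] unfolding valid_comp_def by simp
      moreover have "\<forall>y\<in>set Ss. y \<le> x"
      proof
        fix y assume "y \<in> set Ss"
        then obtain i where i: "i < length Ss" "Ss ! i = y" by (auto simp: in_set_conv_nth)
        then have "y < m_states (F ! i)" "i < length F" using vS P lenF unfolding valid_comp_def by auto
        then show "y \<le> x" using bounds(4)[OF x'] by fastforce
      qed
      ultimately show ?thesis using enc_le_Bnd by (simp add: less_Suc_eq_le)
    qed
    have b2: "list_encode (map list_encode D) < Suc (Bnd x (Bnd (NW x) x))"
    proof -
      have lD2: "length D = length es" "\<forall>e<length es. \<forall>b\<in>set (D ! e). b < ms ! e"
        using rD P unfolding rel_mem_def valid_chan_def by auto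
      have "length (map list_encode D) \<le> x" using lD2 bounds(2)[OF x'] by simp
      moreover have "\<forall>y\<in>set (map list_encode D). y \<le> Bnd (NW x) x"
      proof
        fix y assume "y \<in> set (map list_encode D)"
        then obtain i where i: "i < length D" "y = list_encode (D ! i)" by (auto simp: in_set_conv_nth)
        have "length (D ! i) \<le> NW x" using lD i unfolding NW_def by auto
        moreover have "\<forall>b\<in>set (D ! i). b \<le> x"
          using lD2 i bounds(3)[OF x', of i] lms by fastforce
        ultimately show "y \<le> Bnd (NW x) x" using i enc_le_Bnd by simp
      qed
      ultimately show ?thesis using enc_le_Bnd by (simp add: less_Suc_eq_le)
    qed
    have "\<exists>j<n. \<exists>t<length (m_trans (F ! j)). CEc x (list_encode Ss) (list_encode (map list_encode D)) j t"
      using ce_iff_CEc[OF x P wf refl refl] cD by blast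
    then show "d0 x" unfolding d0 using b1 b2 by blast
  qed
qed

theorem theorem9p4:
  shows "\<exists>f :: recf. \<forall>P fam. wf_protocol P \<longrightarrow>
           eval f [enc_input (P, fam)] (if consistent P fam then 1 else 0)"
proof -
  obtain f where f: "\<forall>xs. length xs = Suc 0 \<longrightarrow> eval f xs (ev DfunE xs)"
    using compile[OF wfe_DfunE] by blast
  have "eval f [enc_input (P, fam)] (if consistent P fam then 1 else 0)" if wf: "wf_protocol P" for P fam
  proof -
    obtain n es ms F where P: "P = (n, es, ms, F)" by (cases P) auto
    have "ev DfunE [enc_input (P, fam)] = (if consistent P fam then 1 else 0)"
      using d0_iff[OF refl P wf] consistent_iff[OF wf] by (simp add: Dfun_def)
    then show ?thesis using f[rule_format, of "[enc_input (P, fam)]"] by simp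
  qed
  then show ?thesis by blast
qed


end
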